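(* Let $(M,d)$ be a pointed metric space and let $\mu\in ba(\widetilde{M})$ with Jordan decomposition $\mu=\mu^+-\mu^-$. The following are equivalent: (i) $\|\Phi^*\mu\|=\|\mu\|$. (ii) For every $\gamma\in(0,1)$ there exist a subset $A\subseteq\widetilde M$ and $f\in B_{\mathrm{Lip}_0(M)}$ such that $\mu^+(A)+\mu^-(\mathfrak{r}(A))\geq \gamma|\mu|(\widetilde M)$ and $f(m_{x,y})\geq\gamma$ for all $(x,y)\in A$. (iii) For every $\gamma\in(0,1)$ there exists a $\gamma$-cyclically monotonic subset $A\subseteq\widetilde M$ with $\mu^+(A)+\mu^-(\mathfrak{r}(A))\geq\gamma|\mu|(\widetilde M)$.
   Context: $(M,d)$ is a metric space with base point $0$; $\mathrm{Lip}_0(M)$ is the real Banach space of Lipschitz $f\colon M\to\mathbb R$ with $f(0)=0$, normed by the best Lipschitz constant, with closed unit ball $B_{\mathrm{Lip}_0(M)}$. $\widetilde M=\{(x,y)\in M\times M: x\neq y\}$, and $f(m_{x,y})=(f(x)-f(y))/d(x,y)$ for $(x,y)\in\widetilde M$. $\mathfrak r\colon\widetilde M\to\widetilde M$ is $\mathfrak r(x,y)=(y,x)$. $ba(\widetilde M)$ is the Banach space of bounded finitely additive signed measures on the power set of $\widetilde M$ with norm $\|\mu\|=|\mu|(\widetilde M)$ (this is the dual of $\ell_\infty(\widetilde M)$). The de Leeuw map $\Phi\colon\mathrm{Lip}_0(M)\to\ell_\infty(\widetilde M)$ is $\Phi f(x,y)=(f(x)-f(y))/d(x,y)$, a linear isometry;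 its adjoint gives $\Phi^*\mu\in\mathrm{Lip}_0(M)^*$, $(\Phi^*\mu)(f)=\int_{\widetilde M}\Phi f\,d\mu$. For $\gamma\in(0,1]$, $A\subseteq\widetilde M$ is $\gamma$-cyclically monotonic if for every finite sequence $(x_1,y_1),\dots,(x_n,y_n)\in A$, with $y_{n+1}=y_1$, $\sum_{i=1}^n\min\{d(x_i,y_{i+1})-\gamma d(x_i,y_i),\,d(y_i,y_{i+1})\}\ge 0$. *)

theory Defs
  imports "HOL-Analysis.Analysis"
begin

definition Mtilde :: "('a::metric_space \<times> 'a) set" where
  "Mtilde = {(x, y). x \<noteq> y}"

definition flip_pair :: "'a \<times> 'b \<Rightarrow> 'b \<times> 'a" where
  "flip_pair = (\<lambda>(x, y). (y, x))"

text \<open>The de Leeuw transform: (Phi f)(x,y) = (f x - f y) / d(x,y) = f(m_{x,y}).\<close>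
definition deLeeuw :: "('a::metric_space \<Rightarrow> real) \<Rightarrow> 'a \<times> 'a \<Rightarrow> real" where
  "deLeeuw f = (\<lambda>(x, y). (f x - f y) / dist x y)"

definition Lip0_ball :: "'a::metric_space \<Rightarrow> ('a \<Rightarrow> real) set" where
  "Lip0_ball z0 = {f. f z0 = 0 \<and> (\<forall>x y. \<bar>f x - f y\<bar> \<le> dist x y)}"

text \<open>Bounded finitely additive signed measures on the power set of a set S
  (values of mu on sets not contained in S are irrelevant).\<close>
definition ba_measure :: "'b set \<Rightarrow> ('b set \<Rightarrow> real) \<Rightarrow> bool" where
  "ba_measure S \<mu> \<longleftrightarrow>
     (\<forall>A B. A \<subseteq> S \<longrightarrow> B \<subseteq> S \<longrightarrow> A \<inter> B = {} \<longrightarrow> \<mu> (A \<union> B) = \<mu> A + \<mu> B) \<and>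
     (\<exists>C. \<forall>A. A \<subseteq> S \<longrightarrow> \<bar>\<mu> A\<bar> \<le> C)"

definition fin_partition :: "'b set set \<Rightarrow> 'b set \<Rightarrow> bool" where
  "fin_partition P E \<longleftrightarrow> finite P \<and> \<Union>P = E \<and> {} \<notin> P \<and>
     (\<forall>A\<in>P. \<forall>B\<in>P. A \<noteq> B \<longrightarrow> A \<inter> B = {})"

definition total_variation :: "('b set \<Rightarrow> real) \<Rightarrow> 'b set \<Rightarrow> real" where
  "total_variation \<mu> E = Sup {(\<Sum>B\<in>P. \<bar>\<mu> B\<bar>) | P. fin_partition P E}"

definition pos_part :: "('b set \<Rightarrow> real) \<Rightarrow> 'b set \<Rightarrow> real" where
  "pos_part \<mu> E = Sup {\<mu> F | F. F \<subseteq> E}"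

definition neg_part :: "('b set \<Rightarrow> real) \<Rightarrow> 'b set \<Rightarrow> real" where
  "neg_part \<mu> E = Sup {- \<mu> F | F. F \<subseteq> E}"

definition ba_norm :: "'b set \<Rightarrow> ('b set \<Rightarrow> real) \<Rightarrow> real" where
  "ba_norm S \<mu> = total_variation \<mu> S"

text \<open>Integral of a bounded function g over S against a bounded finitely additive
  measure mu (Dunford--Schwartz integral), as the limit of Riemann--Stieltjes sums
  over finite partitions on whose blocks g oscillates little.\<close>
definition ba_integral :: "'b set \<Rightarrow> ('b set \<Rightarrow> real) \<Rightarrow> ('b \<Rightarrow> real) \<Rightarrow> real" where
  "ba_integral S \<mu> g = (THE I. \<forall>\<epsilon>>0. \<exists>\<delta>>0. \<forall>P t.
      fin_partition P S \<longrightarrow> (\<forall>B\<in>P. \<forall>u\<in>B. \<forall>v\<in>B. \<bar>g u - g v\<bar> \<le> \<delta>) \<longrightarrow>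
      (\<forall>B\<in>P. t B \<in> B) \<longrightarrow> \<bar>I - (\<Sum>B\<in>P. g (t B) * \<mu> B)\<bar> < \<epsilon>)"

definition dual_norm_Phi_star :: "'a::metric_space \<Rightarrow> (('a \<times> 'a) set \<Rightarrow> real) \<Rightarrow> real" where
  "dual_norm_Phi_star z0 \<mu> =
     Sup {\<bar>ba_integral Mtilde \<mu> (deLeeuw f)\<bar> | f. f \<in> Lip0_ball z0}"

definition cyc_monotone :: "real \<Rightarrow> ('a::metric_space \<times> 'a) set \<Rightarrow> bool" where
  "cyc_monotone \<gamma> A \<longleftrightarrow> A \<subseteq> Mtilde \<and>
     (\<forall>n::nat. \<forall>x y :: nat \<Rightarrow> 'a. n \<ge> 1 \<longrightarrow> (\<forall>i<n. (x i, y i) \<in> A) \<longrightarrow>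
        (\<Sum>i<n. min (dist (x i) (y ((i + 1) mod n)) - \<gamma> * dist (x i) (y i))
                     (dist (y i) (y ((i + 1) mod n)))) \<ge> 0)"

end

theory Submission
  imports Defs
begin


locale bam =
  fixes S :: "'b set" and \<mu> :: "'b set \<Rightarrow> real"
  assumes bam: "ba_measure S \<mu>"
begin

lemma add: "A \<subseteq> S \<Longrightarrow> B \<subseteq> S \<Longrightarrow> A \<inter> B = {} \<Longrightarrow> \<mu> (A \<union> B) = \<mu> A + \<mu> B"
  using bam unfolding ba_measure_def by blast

lemma mu_empty: "\<mu> {} = 0"
  using add[of "{}" "{}"] by simp

definition Cb where "Cb = (SOME C. \<forall>A. A \<subseteq> S \<longrightarrow> \<bar>\<mu> A\<bar> \<le> C)"

lemma Cb: "A \<subseteq> S \<Longrightarrow> \<bar>\<mu> A\<bar> \<le> Cb"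
proof -
  have "\<exists>C. \<forall>A. A \<subseteq> S \<longrightarrow> \<bar>\<mu> A\<bar> \<le> C" using bam unfolding ba_measure_def by blast
  then have "\<forall>A. A \<subseteq> S \<longrightarrow> \<bar>\<mu> A\<bar> \<le> Cb" unfolding Cb_def by (rule someI_ex)
  then show "A \<subseteq> S \<Longrightarrow> \<bar>\<mu> A\<bar> \<le> Cb" by blast
qed

lemma add_fam:
  assumes "finite I" "\<forall>i\<in>I. D i \<subseteq> S" "\<forall>i\<in>I. \<forall>j\<in>I. i \<noteq> j \<longrightarrow> D i \<inter> D j = {}"
  shows "\<mu> (\<Union>i\<in>I. D i) = (\<Sum>i\<in>I. \<mu> (D i))"
  using assms
proof (induction I rule: finite_induct)
  case empty
  then show ?case by (simp add: mu_empty)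
next
  case (insert x F)
  have "\<mu> (\<Union>i\<in>insert x F. D i) = \<mu> (D x \<union> (\<Union>i\<in>F. D i))" by simp
  also have "\<dots> = \<mu> (D x) + \<mu> (\<Union>i\<in>F. D i)"
    apply (rule add) using insert.prems insert.hyps by auto
  also have "\<dots> = \<mu> (D x) + (\<Sum>i\<in>F. \<mu> (D i))"
    using insert.IH insert.prems by auto
  finally show ?case using insert.hyps by simp
qed

lemma sumabs_bound:
  assumes "finite I" "\<forall>i\<in>I. D i \<subseteq> S" "\<forall>i\<in>I. \<forall>j\<in>I. i \<noteq> j \<longrightarrow> D i \<inter> D j = {}"
  shows "(\<Sum>i\<in>I. \<bar>\<mu> (D i)\<bar>) \<le> 2 * Cb"
proof -
  define Ip where "Ip = {i\<in>I. \<mu> (D i) \<ge> 0}"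
  define In where "In = {i\<in>I. \<mu> (D i) < 0}"
  have fin: "finite Ip" "finite In" using assms(1) unfolding Ip_def In_def by auto
  have "(\<Sum>i\<in>I. \<bar>\<mu> (D i)\<bar>) = (\<Sum>i\<in>Ip. \<bar>\<mu> (D i)\<bar>) + (\<Sum>i\<in>In. \<bar>\<mu> (D i)\<bar>)"
  proof -
    have "I = Ip \<union> In" "Ip \<inter> In = {}" unfolding Ip_def In_def by auto
    then show ?thesis using fin by (simp add: sum.union_disjoint)
  qed
  also have "(\<Sum>i\<in>Ip. \<bar>\<mu> (D i)\<bar>) = (\<Sum>i\<in>Ip. \<mu> (D i))" unfolding Ip_def by (rule sum.cong) auto
  also have "\<dots> = \<mu> (\<Union>i\<in>Ip. D i)" apply (rule add_fam[symmetric]) using fin assms unfolding Ip_def by auto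
  also have "(\<Sum>i\<in>In. \<bar>\<mu> (D i)\<bar>) = - (\<Sum>i\<in>In. \<mu> (D i))"
    unfolding Ip_def In_def sum_negf[symmetric] by (rule sum.cong) auto
  also have "(\<Sum>i\<in>In. \<mu> (D i)) = \<mu> (\<Union>i\<in>In. D i)" apply (rule add_fam[symmetric]) using fin assms unfolding In_def by auto
  finally have e: "(\<Sum>i\<in>I. \<bar>\<mu> (D i)\<bar>) = \<mu> (\<Union>i\<in>Ip. D i) - \<mu> (\<Union>i\<in>In. D i)" by simp
  have "\<bar>\<mu> (\<Union>i\<in>Ip. D i)\<bar> \<le> Cb" "\<bar>\<mu> (\<Union>i\<in>In. D i)\<bar> \<le> Cb"
    using assms(2) unfolding Ip_def In_def by (auto intro!: Cb)
  then show ?thesis unfolding e by linarith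
qed

definition TV where "TV = total_variation \<mu> S"

lemma TV_bdd: "bdd_above {(\<Sum>B\<in>P. \<bar>\<mu> B\<bar>) | P. fin_partition P S}"
proof (rule bdd_aboveI[where M = "2 * Cb"])
  fix x assume "x \<in> {(\<Sum>B\<in>P. \<bar>\<mu> B\<bar>) | P. fin_partition P S}"
  then obtain P where P: "fin_partition P S" "x = (\<Sum>B\<in>P. \<bar>\<mu> B\<bar>)" by blast
  show "x \<le> 2 * Cb" unfolding P(2)
    using sumabs_bound[of P "\<lambda>B. B"] P(1) unfolding fin_partition_def by auto
qed

lemma TV_upper:
  assumes "finite I" "\<forall>i\<in>I. D i \<subseteq> S" "\<forall>i\<in>I. \<forall>j\<in>I. i \<noteq> j \<longrightarrow> D i \<inter> D j = {}"
    "(\<Union>i\<in>I. D i) = S"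
  shows "(\<Sum>i\<in>I. \<bar>\<mu> (D i)\<bar>) \<le> TV"
proof -
  define I' where "I' = {i\<in>I. D i \<noteq> {}}"
  have "(\<Sum>i\<in>I. \<bar>\<mu> (D i)\<bar>) = (\<Sum>i\<in>I'. \<bar>\<mu> (D i)\<bar>)"
    apply (rule sum.mono_neutral_right) using assms(1) unfolding I'_def by (auto simp: mu_empty)
  also have "\<dots> = (\<Sum>B\<in>D ` I'. \<bar>\<mu> B\<bar>)"
  proof (rule sum.reindex[symmetric, unfolded comp_def])
    show "inj_on D I'"
    proof (rule inj_onI)
      fix i j assume ij: "i \<in> I'" "j \<in> I'" "D i = D j"
      show "i = j"
      proof (rule ccontr)
        assume "i \<noteq> j"
        then have "D i \<inter> D j = {}" using assms(3) ij unfolding I'_def by auto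
        then show False using ij unfolding I'_def by auto
      qed
    qed
  qed
  also have "\<dots> \<le> TV" unfolding TV_def total_variation_def
  proof (rule cSup_upper[OF _ TV_bdd])
    have dj: "\<forall>A\<in>D ` I'. \<forall>B\<in>D ` I'. A \<noteq> B \<longrightarrow> A \<inter> B = {}"
    proof (intro ballI impI)
      fix A B assume "A \<in> D ` I'" "B \<in> D ` I'" "A \<noteq> B"
      then obtain i j where "i \<in> I" "j \<in> I" "A = D i" "B = D j" "i \<noteq> j" unfolding I'_def by auto
      then show "A \<inter> B = {}" using assms(3) by simp
    qed
    have "fin_partition (D ` I') S" unfolding fin_partition_def
    proof (intro conjI)
      show "finite (D ` I')" using assms(1) unfolding I'_def by auto
      show "\<Union> (D ` I') = S" using assms(4) unfolding I'_def by auto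
      show "{} \<notin> D ` I'" unfolding I'_def by auto
    qed (rule dj)
    then show "(\<Sum>B\<in>D ` I'. \<bar>\<mu> B\<bar>) \<in> {(\<Sum>B\<in>P. \<bar>\<mu> B\<bar>) | P. fin_partition P S}" by blast
  qed
  finally show ?thesis .
qed

lemma TV_nonneg: "0 \<le> TV"
  using TV_upper[of "{()}" "\<lambda>_. S"] by simp

end


context bam begin

definition fineP :: "('b \<Rightarrow> real) \<Rightarrow> real \<Rightarrow> 'i set \<Rightarrow> ('i \<Rightarrow> 'b set) \<Rightarrow> ('i \<Rightarrow> 'b) \<Rightarrow> bool" where
  "fineP g \<delta> I D t \<longleftrightarrow> 0 \<le> \<delta> \<and> finite I \<and> (\<forall>i\<in>I. D i \<subseteq> S) \<and>
     (\<forall>i\<in>I. \<forall>j\<in>I. i \<noteq> j \<longrightarrow> D i \<inter> D j = {}) \<and> (\<Union>i\<in>I. D i) = S \<and>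
     (\<forall>i\<in>I. \<forall>u\<in>D i. \<forall>v\<in>D i. \<bar>g u - g v\<bar> \<le> \<delta>) \<and> (\<forall>i\<in>I. D i \<noteq> {} \<longrightarrow> t i \<in> D i)"

definition RS :: "('b \<Rightarrow> real) \<Rightarrow> 'i set \<Rightarrow> ('i \<Rightarrow> 'b set) \<Rightarrow> ('i \<Rightarrow> 'b) \<Rightarrow> real" where
  "RS g I D t = (\<Sum>i\<in>I. g (t i) * \<mu> (D i))"

lemma comp_one:
  assumes F: "fineP g \<delta> I D t" and G: "fineP g \<delta>' J E s"
    and u: "\<forall>i\<in>I. \<forall>j\<in>J. D i \<inter> E j \<noteq> {} \<longrightarrow> u i j \<in> D i \<inter> E j"
  shows "\<bar>RS g I D t - (\<Sum>i\<in>I. \<Sum>j\<in>J. g (u i j) * \<mu> (D i \<inter> E j))\<bar> \<le> \<delta> * TV"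
proof -
  have Fd: "0 \<le> \<delta>" "finite I" "\<forall>i\<in>I. D i \<subseteq> S" "\<forall>i\<in>I. \<forall>j\<in>I. i \<noteq> j \<longrightarrow> D i \<inter> D j = {}"
    "(\<Union>i\<in>I. D i) = S" "\<forall>i\<in>I. \<forall>u\<in>D i. \<forall>v\<in>D i. \<bar>g u - g v\<bar> \<le> \<delta>"
    "\<forall>i\<in>I. D i \<noteq> {} \<longrightarrow> t i \<in> D i" using F unfolding fineP_def by auto
  have Gd: "finite J" "\<forall>j\<in>J. E j \<subseteq> S" "\<forall>i\<in>J. \<forall>j\<in>J. i \<noteq> j \<longrightarrow> E i \<inter> E j = {}"
    "(\<Union>j\<in>J. E j) = S" using G unfolding fineP_def by auto
  have split: "\<mu> (D i) = (\<Sum>j\<in>J. \<mu> (D i \<inter> E j))" if "i \<in> I" for i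
  proof -
    have "D i = (\<Union>j\<in>J. D i \<inter> E j)" using Gd(4) Fd(3) that by auto
    then have "\<mu> (D i) = \<mu> (\<Union>j\<in>J. D i \<inter> E j)" by simp
    also have "\<dots> = (\<Sum>j\<in>J. \<mu> (D i \<inter> E j))"
    proof (rule add_fam)
      show "finite J" by (rule Gd(1))
      show "\<forall>j\<in>J. D i \<inter> E j \<subseteq> S" using Fd(3) that by auto
      show "\<forall>j\<in>J. \<forall>k\<in>J. j \<noteq> k \<longrightarrow> D i \<inter> E j \<inter> (D i \<inter> E k) = {}"
      proof (intro ballI impI)
        fix j k assume "j \<in> J" "k \<in> J" "j \<noteq> k"
        then have "E j \<inter> E k = {}" using Gd(3) by simp
        then show "D i \<inter> E j \<inter> (D i \<inter> E k) = {}" by blast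
      qed
    qed
    finally show ?thesis .
  qed
  have "RS g I D t = (\<Sum>i\<in>I. \<Sum>j\<in>J. g (t i) * \<mu> (D i \<inter> E j))"
    unfolding RS_def by (rule sum.cong) (simp_all add: split sum_distrib_left)
  then have "RS g I D t - (\<Sum>i\<in>I. \<Sum>j\<in>J. g (u i j) * \<mu> (D i \<inter> E j))
      = (\<Sum>i\<in>I. \<Sum>j\<in>J. (g (t i) - g (u i j)) * \<mu> (D i \<inter> E j))"
    by (simp add: sum_subtractf[symmetric] left_diff_distrib)
  also have "\<bar>\<dots>\<bar> \<le> (\<Sum>i\<in>I. \<Sum>j\<in>J. \<bar>(g (t i) - g (u i j)) * \<mu> (D i \<inter> E j)\<bar>)"
    by (rule order_trans[OF sum_abs]) (intro sum_mono sum_abs)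
  also have "\<dots> \<le> (\<Sum>i\<in>I. \<Sum>j\<in>J. \<delta> * \<bar>\<mu> (D i \<inter> E j)\<bar>)"
  proof (intro sum_mono)
    fix i j assume ij: "i \<in> I" "j \<in> J"
    show "\<bar>(g (t i) - g (u i j)) * \<mu> (D i \<inter> E j)\<bar> \<le> \<delta> * \<bar>\<mu> (D i \<inter> E j)\<bar>"
    proof (cases "D i \<inter> E j = {}")
      case True then show ?thesis by (simp add: mu_empty)
    next
      case False
      then have "t i \<in> D i" "u i j \<in> D i" using Fd(7) u ij by auto
      then have "\<bar>g (t i) - g (u i j)\<bar> \<le> \<delta>" using Fd(6) ij by auto
      then show ?thesis by (simp add: abs_mult mult_right_mono)
    qed
  qed
  also have "\<dots> = \<delta> * (\<Sum>p\<in>I \<times> J. \<bar>\<mu> (D (fst p) \<inter> E (snd p))\<bar>)"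
    by (simp add: sum_distrib_left sum.cartesian_product case_prod_beta)
  also have "\<dots> \<le> \<delta> * TV"
  proof (rule mult_left_mono[OF TV_upper Fd(1)])
    show "finite (I \<times> J)" using Fd(2) Gd(1) by simp
    show "\<forall>p\<in>I \<times> J. D (fst p) \<inter> E (snd p) \<subseteq> S" using Fd(3) by auto
    show "\<forall>p\<in>I \<times> J. \<forall>q\<in>I \<times> J. p \<noteq> q \<longrightarrow> D (fst p) \<inter> E (snd p) \<inter> (D (fst q) \<inter> E (snd q)) = {}"
    proof (intro ballI impI)
      fix p q assume pq: "p \<in> I \<times> J" "q \<in> I \<times> J" "p \<noteq> q"
      then have "fst p \<noteq> fst q \<or> snd p \<noteq> snd q" by (auto simp: prod_eq_iff)
      then show "D (fst p) \<inter> E (snd p) \<inter> (D (fst q) \<inter> E (snd q)) = {}"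
      proof
        assume "fst p \<noteq> fst q"
        moreover have "fst p \<in> I" "fst q \<in> I" using pq by auto
        ultimately have "D (fst p) \<inter> D (fst q) = {}" using Fd(4) by simp
        then show ?thesis by blast
      next
        assume "snd p \<noteq> snd q"
        moreover have "snd p \<in> J" "snd q \<in> J" using pq by auto
        ultimately have "E (snd p) \<inter> E (snd q) = {}" using Gd(3) by simp
        then show ?thesis by blast
      qed
    qed
    show "(\<Union>p\<in>I \<times> J. D (fst p) \<inter> E (snd p)) = S"
    proof
      show "(\<Union>p\<in>I \<times> J. D (fst p) \<inter> E (snd p)) \<subseteq> S" using Fd(3) by auto
      show "S \<subseteq> (\<Union>p\<in>I \<times> J. D (fst p) \<inter> E (snd p))"
      proof
        fix x assume "x \<in> S"
        then obtain i j where "i \<in> I" "x \<in> D i" "j \<in> J" "x \<in> E j" using Fd(5) Gd(4) by blast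
        then show "x \<in> (\<Union>p\<in>I \<times> J. D (fst p) \<inter> E (snd p))" by (intro UN_I[of "(i,j)"]) auto
      qed
    qed
  qed
  finally show ?thesis .
qed

lemma comp:
  assumes F: "fineP g \<delta> I D t" and G: "fineP g \<delta>' J E s"
  shows "\<bar>RS g I D t - RS g J E s\<bar> \<le> (\<delta> + \<delta>') * TV"
proof -
  define u where "u i j = (SOME x. x \<in> D i \<inter> E j)" for i j
  have u: "\<forall>i\<in>I. \<forall>j\<in>J. D i \<inter> E j \<noteq> {} \<longrightarrow> u i j \<in> D i \<inter> E j"
    unfolding u_def by (metis some_in_eq)
  have u': "\<forall>j\<in>J. \<forall>i\<in>I. E j \<inter> D i \<noteq> {} \<longrightarrow> u i j \<in> E j \<inter> D i"
    using u by blast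
  have 1: "\<bar>RS g I D t - (\<Sum>i\<in>I. \<Sum>j\<in>J. g (u i j) * \<mu> (D i \<inter> E j))\<bar> \<le> \<delta> * TV"
    by (rule comp_one[OF F G u])
  have 2: "\<bar>RS g J E s - (\<Sum>j\<in>J. \<Sum>i\<in>I. g (u i j) * \<mu> (E j \<inter> D i))\<bar> \<le> \<delta>' * TV"
    by (rule comp_one[OF G F u'])
  have "(\<Sum>j\<in>J. \<Sum>i\<in>I. g (u i j) * \<mu> (E j \<inter> D i)) = (\<Sum>i\<in>I. \<Sum>j\<in>J. g (u i j) * \<mu> (D i \<inter> E j))"
    by (subst sum.swap) (simp add: Int_commute)
  then show ?thesis using 1 2 by (simp add: distrib_right)
qed

end


lemma ratio_lt:
  fixes T e :: real assumes "0 \<le> T" "0 < e" shows "e / (T + 1) * T < e"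
proof -
  have "e / (T + 1) * T = e * (T / (T + 1))" by simp
  also have "T / (T + 1) < 1" using assms by simp
  then have "e * (T / (T + 1)) < e * 1" using assms by (intro mult_strict_left_mono) auto
  finally show ?thesis by simp
qed
lemma ratio2_le:
  fixes T e :: real assumes "0 \<le> T" "0 < e" shows "2 * (e / (2 * (T + 1))) * T \<le> e"
proof -
  have "2 * (e / (2 * (T + 1))) = e / (T + 1)" by (metis mult_divide_mult_cancel_left_if times_divide_eq_right zero_neq_numeral)
  then have "2 * (e / (2 * (T + 1))) * T = e / (T + 1) * T" by simp
  then show ?thesis using ratio_lt[OF assms] by simp
qed

context bam begin

lemma exist_fine:
  fixes g :: "'b \<Rightarrow> real"
  assumes bd: "\<forall>u\<in>S. \<bar>g u\<bar> \<le> Bd" and d: "0 < \<delta>"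
  shows "\<exists>P t. fin_partition P S \<and> (\<forall>B\<in>P. \<forall>u\<in>B. \<forall>v\<in>B. \<bar>g u - g v\<bar> \<le> \<delta>) \<and> (\<forall>B\<in>P. t B \<in> B)"
proof -
  define k where "k u = \<lfloor>g u / \<delta>\<rfloor>" for u
  define Blk where "Blk j = {u\<in>S. k u = j}" for j
  define P where "P = Blk ` (k ` S)"
  define N where "N = \<lceil>Bd / \<delta>\<rceil>"
  have kr: "k ` S \<subseteq> {-N..N}"
  proof
    fix j assume "j \<in> k ` S"
    then obtain u where u: "u \<in> S" "j = k u" by blast
    have "\<bar>g u\<bar> \<le> Bd" using bd u by auto
    then have b: "- Bd \<le> g u" "g u \<le> Bd" by auto
    have a: "- Bd / \<delta> \<le> g u / \<delta>" "g u / \<delta> \<le> Bd / \<delta>"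
      using divide_right_mono[OF b(1), of \<delta>] divide_right_mono[OF b(2), of \<delta>] d by auto
    have "\<lfloor>g u / \<delta>\<rfloor> \<le> \<lfloor>Bd / \<delta>\<rfloor>" using a(2) by (rule floor_mono)
    moreover have "\<lfloor>Bd / \<delta>\<rfloor> \<le> \<lceil>Bd / \<delta>\<rceil>" by (rule floor_le_ceiling)
    ultimately have "\<lfloor>g u / \<delta>\<rfloor> \<le> \<lceil>Bd / \<delta>\<rceil>" by linarith
    moreover have "\<lfloor>- Bd / \<delta>\<rfloor> \<le> \<lfloor>g u / \<delta>\<rfloor>" using a(1) by (rule floor_mono)
    moreover have "\<lfloor>- Bd / \<delta>\<rfloor> = - \<lceil>Bd / \<delta>\<rceil>" by (simp add: ceiling_def)
    ultimately show "j \<in> {-N..N}" unfolding u N_def k_def by auto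
  qed
  have finP: "finite P" unfolding P_def using finite_subset[OF kr] by auto
  have part: "fin_partition P S" unfolding fin_partition_def
  proof (intro conjI)
    show "\<Union> P = S" unfolding P_def Blk_def by auto
    show "{} \<notin> P" unfolding P_def Blk_def by auto
    show "\<forall>A\<in>P. \<forall>B\<in>P. A \<noteq> B \<longrightarrow> A \<inter> B = {}"
    proof (intro ballI impI)
      fix A B assume "A \<in> P" "B \<in> P" "A \<noteq> B"
      then obtain a b where ab: "A = Blk a" "B = Blk b" unfolding P_def by auto
      with \<open>A \<noteq> B\<close> have "a \<noteq> b" by auto
      then show "A \<inter> B = {}" unfolding ab Blk_def by auto
    qed
  qed (rule finP)
  have osc: "\<forall>B\<in>P. \<forall>u\<in>B. \<forall>v\<in>B. \<bar>g u - g v\<bar> \<le> \<delta>"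
  proof (intro ballI)
    fix B u v assume "B \<in> P" "u \<in> B" "v \<in> B"
    then have e: "k u = k v" unfolding P_def Blk_def by auto
    have f1: "of_int (k u) \<le> g u / \<delta> \<and> g u / \<delta> < of_int (k u + 1)" unfolding k_def by (rule floor_correct)
    have f2: "of_int (k v) \<le> g v / \<delta> \<and> g v / \<delta> < of_int (k v + 1)" unfolding k_def by (rule floor_correct)
    have h: "\<bar>g u / \<delta> - g v / \<delta>\<bar> \<le> 1" using f1 f2 unfolding e abs_le_iff by linarith
    have "g u - g v = \<delta> * (g u / \<delta> - g v / \<delta>)" using d by (simp add: right_diff_distrib)
    then have "\<bar>g u - g v\<bar> = \<delta> * \<bar>g u / \<delta> - g v / \<delta>\<bar>" using d by (simp add: abs_mult)
    also have "\<dots> \<le> \<delta> * 1" using h d by (intro mult_left_mono) auto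
    finally show "\<bar>g u - g v\<bar> \<le> \<delta>" by simp
  qed
  define t where "t B = (SOME u. u \<in> B)" for B :: "'b set"
  have "\<forall>B\<in>P. t B \<in> B"
  proof
    fix B assume "B \<in> P"
    then have "B \<noteq> {}" using part unfolding fin_partition_def by auto
    then show "t B \<in> B" unfolding t_def by (simp add: some_in_eq)
  qed
  then show ?thesis using part osc by blast
qed

lemma partition_fine:
  assumes "fin_partition P S" "\<forall>B\<in>P. \<forall>u\<in>B. \<forall>v\<in>B. \<bar>g u - g v\<bar> \<le> \<delta>" "\<forall>B\<in>P. t B \<in> B" "0 \<le> \<delta>"
  shows "fineP g \<delta> P id t"
  using assms unfolding fineP_def fin_partition_def by auto

lemma fine_exists:
  fixes g :: "'b \<Rightarrow> real"
  assumes bd: "\<forall>u\<in>S. \<bar>g u\<bar> \<le> Bd" and d: "0 < \<delta>"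
  shows "\<exists>P t. fineP g \<delta> P (id :: 'b set \<Rightarrow> 'b set) t"
proof -
  obtain P t where "fin_partition P S" "\<forall>B\<in>P. \<forall>u\<in>B. \<forall>v\<in>B. \<bar>g u - g v\<bar> \<le> \<delta>" "\<forall>B\<in>P. t B \<in> B"
    using exist_fine[OF bd d] by blast
  then have "fineP g \<delta> P id t" using d by (intro partition_fine) auto
  then show ?thesis by blast
qed

definition Lint :: "('b \<Rightarrow> real) \<Rightarrow> real" where
  "Lint g = Sup {RS g P id t - \<delta> * TV | P t \<delta>. 0 < \<delta> \<and> fineP g \<delta> P (id :: 'b set \<Rightarrow> 'b set) t}"

lemma L_approx:
  assumes bd: "\<forall>u\<in>S. \<bar>g u\<bar> \<le> Bd" and F: "fineP g \<delta> I D t"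
  shows "\<bar>Lint g - RS g I D t\<bar> \<le> \<delta> * TV"
proof -
  define X where "X = {RS g P id t - \<delta> * TV | P t \<delta>. 0 < \<delta> \<and> fineP g \<delta> P (id :: 'b set \<Rightarrow> 'b set) t}"
  have ne: "X \<noteq> {}"
  proof -
    obtain P t' where "fineP g 1 P (id :: 'b set \<Rightarrow> 'b set) t'" using fine_exists[OF bd zero_less_one] by blast
    then have "RS g P id t' - 1 * TV \<in> X" unfolding X_def by (intro CollectI exI[of _ P] exI[of _ t'] exI[of _ 1]) simp
    then show ?thesis by blast
  qed
  have ub: "x \<le> RS g I D t + \<delta> * TV" if "x \<in> X" for x
  proof -
    obtain P t' \<delta>' where x: "x = RS g P id t' - \<delta>' * TV" "0 < \<delta>'" "fineP g \<delta>' P id t'"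
      using \<open>x \<in> X\<close> unfolding X_def by blast
    have "\<bar>RS g P id t' - RS g I D t\<bar> \<le> (\<delta>' + \<delta>) * TV" by (rule comp[OF x(3) F])
    then show ?thesis unfolding x(1) abs_le_iff distrib_right by linarith
  qed
  have bdd: "bdd_above X" using ub by (rule bdd_aboveI)
  have 1: "Lint g \<le> RS g I D t + \<delta> * TV"
    unfolding Lint_def X_def[symmetric] using ne ub by (rule cSup_least)
  have 2: "RS g I D t - \<delta> * TV \<le> Lint g"
  proof (rule field_le_epsilon)
    fix e :: real assume e: "0 < e"
    define d' where "d' = e / (2 * (TV + 1))"
    have d': "0 < d'" unfolding d'_def using e TV_nonneg by auto
    obtain P t' where P: "fineP g d' P id t'" using fine_exists[OF bd d'] by blast
    have inX: "RS g P id t' - d' * TV \<in> X" unfolding X_def using P d' by (intro CollectI exI[of _ P] exI[of _ t'] exI[of _ d']) simp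
    have "RS g P id t' - d' * TV \<le> Lint g" unfolding Lint_def X_def[symmetric]
      by (rule cSup_upper[OF inX bdd])
    moreover have "\<bar>RS g P id t' - RS g I D t\<bar> \<le> (d' + \<delta>) * TV" by (rule comp[OF P F])
    moreover have "2 * d' * TV \<le> e" unfolding d'_def by (rule ratio2_le[OF TV_nonneg e])
    ultimately show "RS g I D t - \<delta> * TV \<le> Lint g + e" unfolding abs_le_iff distrib_right by linarith
  qed
  show ?thesis using 1 2 by linarith
qed

lemma integral_eq:
  assumes bd: "\<forall>u\<in>S. \<bar>g u\<bar> \<le> Bd"
  shows "ba_integral S \<mu> g = Lint g"
  unfolding ba_integral_def
proof (rule the_equality)
  show "\<forall>\<epsilon>>0. \<exists>\<delta>>0. \<forall>P t. fin_partition P S \<longrightarrow> (\<forall>B\<in>P. \<forall>u\<in>B. \<forall>v\<in>B. \<bar>g u - g v\<bar> \<le> \<delta>) \<longrightarrow>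
      (\<forall>B\<in>P. t B \<in> B) \<longrightarrow> \<bar>Lint g - (\<Sum>B\<in>P. g (t B) * \<mu> B)\<bar> < \<epsilon>"
  proof (intro allI impI)
    fix e :: real assume e: "0 < e"
    define d where "d = e / (TV + 1)"
    have d: "0 < d" unfolding d_def using e TV_nonneg by auto
    have dT: "d * TV < e" unfolding d_def by (rule ratio_lt[OF TV_nonneg e])
    show "\<exists>\<delta>>0. \<forall>P t. fin_partition P S \<longrightarrow> (\<forall>B\<in>P. \<forall>u\<in>B. \<forall>v\<in>B. \<bar>g u - g v\<bar> \<le> \<delta>) \<longrightarrow>
      (\<forall>B\<in>P. t B \<in> B) \<longrightarrow> \<bar>Lint g - (\<Sum>B\<in>P. g (t B) * \<mu> B)\<bar> < e"
    proof (intro exI[of _ d] conjI d allI impI)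
      fix P t assume "fin_partition P S" "\<forall>B\<in>P. \<forall>u\<in>B. \<forall>v\<in>B. \<bar>g u - g v\<bar> \<le> d" "\<forall>B\<in>P. t B \<in> B"
      then have "fineP g d P id t" using partition_fine d by auto
      from L_approx[OF bd this] dT show "\<bar>Lint g - (\<Sum>B\<in>P. g (t B) * \<mu> B)\<bar> < e"
        unfolding RS_def by simp
    qed
  qed
next
  fix I assume Q: "\<forall>\<epsilon>>0. \<exists>\<delta>>0. \<forall>P t. fin_partition P S \<longrightarrow> (\<forall>B\<in>P. \<forall>u\<in>B. \<forall>v\<in>B. \<bar>g u - g v\<bar> \<le> \<delta>) \<longrightarrow>
      (\<forall>B\<in>P. t B \<in> B) \<longrightarrow> \<bar>I - (\<Sum>B\<in>P. g (t B) * \<mu> B)\<bar> < \<epsilon>"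
  show "I = Lint g"
  proof (rule ccontr)
    assume ne: "I \<noteq> Lint g"
    define e where "e = \<bar>I - Lint g\<bar> / 2"
    have e: "0 < e" unfolding e_def using ne by auto
    obtain d where d: "0 < d" and dQ: "\<forall>P t. fin_partition P S \<longrightarrow> (\<forall>B\<in>P. \<forall>u\<in>B. \<forall>v\<in>B. \<bar>g u - g v\<bar> \<le> d) \<longrightarrow>
      (\<forall>B\<in>P. t B \<in> B) \<longrightarrow> \<bar>I - (\<Sum>B\<in>P. g (t B) * \<mu> B)\<bar> < e"
      using mp[OF spec[OF Q, of e] e] by blast
    define d2 where "d2 = min d (e / (TV + 1))"
    have d2: "0 < d2" "d2 \<le> d" unfolding d2_def using d e TV_nonneg by auto
    have d2T: "d2 * TV < e"
    proof -
      have "d2 * TV \<le> (e / (TV + 1)) * TV" unfolding d2_def using TV_nonneg by (intro mult_right_mono) auto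
      also have "\<dots> < e" by (rule ratio_lt[OF TV_nonneg e])
      finally show ?thesis .
    qed
    obtain P t where P: "fin_partition P S" "\<forall>B\<in>P. \<forall>u\<in>B. \<forall>v\<in>B. \<bar>g u - g v\<bar> \<le> d2" "\<forall>B\<in>P. t B \<in> B"
      using exist_fine[OF bd d2(1)] by blast
    have "\<forall>B\<in>P. \<forall>u\<in>B. \<forall>v\<in>B. \<bar>g u - g v\<bar> \<le> d" using P(2) d2(2) by force
    then have 1: "\<bar>I - (\<Sum>B\<in>P. g (t B) * \<mu> B)\<bar> < e" using dQ P(1,3) by blast
    have "fineP g d2 P id t" using partition_fine P d2 by auto
    from L_approx[OF bd this] have 2: "\<bar>Lint g - (\<Sum>B\<in>P. g (t B) * \<mu> B)\<bar> \<le> d2 * TV" unfolding RS_def by simp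
    from 1 2 d2T have "\<bar>I - Lint g\<bar> < 2 * e" by linarith
    then show False unfolding e_def by simp
  qed
qed

lemma integral_approx:
  assumes bd: "\<forall>u\<in>S. \<bar>g u\<bar> \<le> Bd" and F: "fineP g \<delta> I D t"
  shows "\<bar>ba_integral S \<mu> g - RS g I D t\<bar> \<le> \<delta> * TV"
  using L_approx[OF bd F] integral_eq[OF bd] by simp

lemma integral_neg:
  assumes bd: "\<forall>u\<in>S. \<bar>g u\<bar> \<le> Bd"
  shows "ba_integral S \<mu> (\<lambda>u. - g u) = - ba_integral S \<mu> g"
proof -
  have bd': "\<forall>u\<in>S. \<bar>- g u\<bar> \<le> Bd" using bd by simp
  have "\<bar>ba_integral S \<mu> (\<lambda>u. - g u) + ba_integral S \<mu> g\<bar> \<le> 0"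
  proof (rule field_le_epsilon)
    fix e :: real assume e: "0 < e"
    define d where "d = e / (2 * (TV + 1))"
    have d: "0 < d" unfolding d_def using e TV_nonneg by auto
    obtain P t where P: "fineP g d P id t" using fine_exists[OF bd d] by blast
    then have P': "fineP (\<lambda>u. - g u) d P id t" unfolding fineP_def by (simp add: abs_minus_commute)
    have "RS (\<lambda>u. - g u) P id t = - RS g P id t" unfolding RS_def by (simp add: sum_negf)
    moreover note integral_approx[OF bd P] integral_approx[OF bd' P']
    moreover have "2 * d * TV \<le> e" unfolding d_def by (rule ratio2_le[OF TV_nonneg e])
    ultimately show "\<bar>ba_integral S \<mu> (\<lambda>u. - g u) + ba_integral S \<mu> g\<bar> \<le> 0 + e" by linarith
  qed
  then show ?thesis by simp
qed

lemma integral_bound: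
  assumes bd: "\<forall>u\<in>S. \<bar>g u\<bar> \<le> 1"
  shows "\<bar>ba_integral S \<mu> g\<bar> \<le> TV"
proof (rule field_le_epsilon)
  fix e :: real assume e: "0 < e"
  define d where "d = e / (TV + 1)"
  have d: "0 < d" unfolding d_def using e TV_nonneg by auto
  obtain P t where P: "fineP g d P id t" using fine_exists[OF bd d] by blast
  have Pd: "finite P" "\<forall>i\<in>P. i \<subseteq> S" "\<forall>i\<in>P. \<forall>j\<in>P. i \<noteq> j \<longrightarrow> i \<inter> j = {}" "\<Union>P = S"
    "\<forall>i\<in>P. i \<noteq> {} \<longrightarrow> t i \<in> i" using P unfolding fineP_def by auto
  have "\<bar>RS g P id t\<bar> \<le> (\<Sum>B\<in>P. \<bar>g (t B) * \<mu> B\<bar>)" unfolding RS_def by (simp add: sum_abs)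
  also have "\<dots> \<le> (\<Sum>B\<in>P. \<bar>\<mu> (id B)\<bar>)"
  proof (rule sum_mono)
    fix B assume B: "B \<in> P"
    show "\<bar>g (t B) * \<mu> B\<bar> \<le> \<bar>\<mu> (id B)\<bar>"
    proof (cases "B = {}")
      case True then show ?thesis by (simp add: mu_empty)
    next
      case False
      then have "\<bar>g (t B)\<bar> \<le> 1" using Pd B bd by blast
      then show ?thesis by (simp add: abs_mult mult_left_le_one_le)
    qed
  qed
  also have "\<dots> \<le> TV" by (rule TV_upper) (use Pd in auto)
  finally have 1: "\<bar>RS g P id t\<bar> \<le> TV" .
  have 2: "d * TV \<le> e" unfolding d_def using ratio_lt[OF TV_nonneg e] by simp
  show "\<bar>ba_integral S \<mu> g\<bar> \<le> TV + e" using integral_approx[OF bd P] 1 2 by linarith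
qed

end


context bam begin

lemma refine3:
  fixes g :: "'b \<Rightarrow> real"
  assumes bd: "\<forall>u\<in>S. \<bar>g u\<bar> \<le> Bd" and F: "fineP g \<delta> I D t"
    and Z: "Z0 \<subseteq> S" "Z1 \<subseteq> S" "Z2 \<subseteq> S" "Z0 \<inter> Z1 = {}" "Z0 \<inter> Z2 = {}" "Z1 \<inter> Z2 = {}"
       "Z0 \<union> Z1 \<union> Z2 = S"
  shows "\<exists>t0 t1 t2. (\<forall>i\<in>I. D i \<inter> Z0 \<noteq> {} \<longrightarrow> t0 i \<in> D i \<inter> Z0) \<and>
     (\<forall>i\<in>I. D i \<inter> Z1 \<noteq> {} \<longrightarrow> t1 i \<in> D i \<inter> Z1) \<and>
     (\<forall>i\<in>I. D i \<inter> Z2 \<noteq> {} \<longrightarrow> t2 i \<in> D i \<inter> Z2) \<and>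
     \<bar>ba_integral S \<mu> g - (\<Sum>i\<in>I. g (t0 i) * \<mu> (D i \<inter> Z0) + g (t1 i) * \<mu> (D i \<inter> Z1)
         + g (t2 i) * \<mu> (D i \<inter> Z2))\<bar> \<le> \<delta> * TV"
proof -
  have Fd: "0 \<le> \<delta>" "finite I" "\<forall>i\<in>I. D i \<subseteq> S" "\<forall>i\<in>I. \<forall>j\<in>I. i \<noteq> j \<longrightarrow> D i \<inter> D j = {}"
    "(\<Union>i\<in>I. D i) = S" "\<forall>i\<in>I. \<forall>u\<in>D i. \<forall>v\<in>D i. \<bar>g u - g v\<bar> \<le> \<delta>"
    using F unfolding fineP_def by auto
  define Zf where "Zf k = (if k = (0::nat) then Z0 else if k = 1 then Z1 else Z2)" for k
  define J where "J = {0, 1, 2::nat}"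
  define tt where "tt i k = (SOME x. x \<in> D i \<inter> Zf k)" for i k
  have tt: "D i \<inter> Zf k \<noteq> {} \<Longrightarrow> tt i k \<in> D i \<inter> Zf k" for i k
    unfolding tt_def by (subst some_in_eq)
  have ZfS: "\<forall>j\<in>J. Zf j \<subseteq> S" unfolding J_def Zf_def using Z by auto
  have Zfd: "\<forall>j\<in>J. \<forall>k\<in>J. j \<noteq> k \<longrightarrow> Zf j \<inter> Zf k = {}"
    unfolding J_def Zf_def using Z by (auto simp: Int_commute)
  have ZfU: "(\<Union>j\<in>J. Zf j) = S" unfolding J_def Zf_def using Z(7) by auto
  have PF: "fineP g \<delta> (I \<times> J) (\<lambda>p. D (fst p) \<inter> Zf (snd p)) (\<lambda>p. tt (fst p) (snd p))"
    unfolding fineP_def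
  proof (intro conjI)
    show "0 \<le> \<delta>" by (rule Fd(1))
    show "finite (I \<times> J)" using Fd(2) unfolding J_def by simp
    show "\<forall>i\<in>I \<times> J. D (fst i) \<inter> Zf (snd i) \<subseteq> S" using Fd(3) by auto
    show "\<forall>p\<in>I \<times> J. \<forall>q\<in>I \<times> J. p \<noteq> q \<longrightarrow> D (fst p) \<inter> Zf (snd p) \<inter> (D (fst q) \<inter> Zf (snd q)) = {}"
    proof (intro ballI impI)
      fix p q assume pq: "p \<in> I \<times> J" "q \<in> I \<times> J" "p \<noteq> q"
      then have "fst p \<noteq> fst q \<or> snd p \<noteq> snd q" by (auto simp: prod_eq_iff)
      then show "D (fst p) \<inter> Zf (snd p) \<inter> (D (fst q) \<inter> Zf (snd q)) = {}"
      proof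
        assume "fst p \<noteq> fst q"
        moreover have "fst p \<in> I" "fst q \<in> I" using pq by auto
        ultimately have "D (fst p) \<inter> D (fst q) = {}" using Fd(4) by simp
        then show ?thesis by blast
      next
        assume "snd p \<noteq> snd q"
        moreover have "snd p \<in> J" "snd q \<in> J" using pq by auto
        ultimately have "Zf (snd p) \<inter> Zf (snd q) = {}" using Zfd by simp
        then show ?thesis by blast
      qed
    qed
    show "(\<Union>p\<in>I \<times> J. D (fst p) \<inter> Zf (snd p)) = S"
    proof
      show "(\<Union>p\<in>I \<times> J. D (fst p) \<inter> Zf (snd p)) \<subseteq> S" using Fd(3) by auto
      show "S \<subseteq> (\<Union>p\<in>I \<times> J. D (fst p) \<inter> Zf (snd p))"
      proof
        fix x assume "x \<in> S"
        then obtain i j where "i \<in> I" "x \<in> D i" "j \<in> J" "x \<in> Zf j" using Fd(5) ZfU by blast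
        then show "x \<in> (\<Union>p\<in>I \<times> J. D (fst p) \<inter> Zf (snd p))" by (intro UN_I[of "(i,j)"]) auto
      qed
    qed
    show "\<forall>p\<in>I \<times> J. \<forall>u\<in>D (fst p) \<inter> Zf (snd p). \<forall>v\<in>D (fst p) \<inter> Zf (snd p). \<bar>g u - g v\<bar> \<le> \<delta>"
      using Fd(6) by auto
    show "\<forall>p\<in>I \<times> J. D (fst p) \<inter> Zf (snd p) \<noteq> {} \<longrightarrow> tt (fst p) (snd p) \<in> D (fst p) \<inter> Zf (snd p)"
      using tt by auto
  qed
  have "RS g (I \<times> J) (\<lambda>p. D (fst p) \<inter> Zf (snd p)) (\<lambda>p. tt (fst p) (snd p))
      = (\<Sum>i\<in>I. \<Sum>k\<in>J. g (tt i k) * \<mu> (D i \<inter> Zf k))"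
    unfolding RS_def by (simp add: sum.cartesian_product case_prod_beta)
  also have "\<dots> = (\<Sum>i\<in>I. g (tt i 0) * \<mu> (D i \<inter> Z0) + g (tt i 1) * \<mu> (D i \<inter> Z1)
         + g (tt i 2) * \<mu> (D i \<inter> Z2))"
    unfolding J_def Zf_def by (simp add: add.assoc)
  finally have eq: "RS g (I \<times> J) (\<lambda>p. D (fst p) \<inter> Zf (snd p)) (\<lambda>p. tt (fst p) (snd p)) = \<dots>" .
  show ?thesis
  proof (intro exI conjI)
    show "\<forall>i\<in>I. D i \<inter> Z0 \<noteq> {} \<longrightarrow> tt i 0 \<in> D i \<inter> Z0" using tt[of _ 0] unfolding Zf_def by auto
    show "\<forall>i\<in>I. D i \<inter> Z1 \<noteq> {} \<longrightarrow> tt i 1 \<in> D i \<inter> Z1" using tt[of _ 1] unfolding Zf_def by auto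
    show "\<forall>i\<in>I. D i \<inter> Z2 \<noteq> {} \<longrightarrow> tt i 2 \<in> D i \<inter> Z2" using tt[of _ 2] unfolding Zf_def by auto
    show "\<bar>ba_integral S \<mu> g - (\<Sum>i\<in>I. g (tt i 0) * \<mu> (D i \<inter> Z0) + g (tt i 1) * \<mu> (D i \<inter> Z1)
         + g (tt i 2) * \<mu> (D i \<inter> Z2))\<bar> \<le> \<delta> * TV"
      using integral_approx[OF bd PF] unfolding eq .
  qed
qed

lemma TV3:
  assumes F: "fineP g \<delta> I D t"
    and Z: "Z0 \<subseteq> S" "Z1 \<subseteq> S" "Z2 \<subseteq> S" "Z0 \<inter> Z1 = {}" "Z0 \<inter> Z2 = {}" "Z1 \<inter> Z2 = {}"
       "Z0 \<union> Z1 \<union> Z2 = S"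
  shows "(\<Sum>i\<in>I. \<bar>\<mu> (D i \<inter> Z0)\<bar> + \<bar>\<mu> (D i \<inter> Z1)\<bar> + \<bar>\<mu> (D i \<inter> Z2)\<bar>) \<le> TV"
proof -
  have Fd: "finite I" "\<forall>i\<in>I. D i \<subseteq> S" "\<forall>i\<in>I. \<forall>j\<in>I. i \<noteq> j \<longrightarrow> D i \<inter> D j = {}"
    "(\<Union>i\<in>I. D i) = S"
    using F unfolding fineP_def by auto
  define Zf where "Zf k = (if k = (0::nat) then Z0 else if k = 1 then Z1 else Z2)" for k
  define J where "J = {0, 1, 2::nat}"
  have Zfd: "\<forall>j\<in>J. \<forall>k\<in>J. j \<noteq> k \<longrightarrow> Zf j \<inter> Zf k = {}"
    unfolding J_def Zf_def using Z by (auto simp: Int_commute)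
  have ZfU: "(\<Union>j\<in>J. Zf j) = S" unfolding J_def Zf_def using Z(7) by auto
  have "(\<Sum>i\<in>I. \<bar>\<mu> (D i \<inter> Z0)\<bar> + \<bar>\<mu> (D i \<inter> Z1)\<bar> + \<bar>\<mu> (D i \<inter> Z2)\<bar>)
      = (\<Sum>i\<in>I. \<Sum>k\<in>J. \<bar>\<mu> (D i \<inter> Zf k)\<bar>)"
    unfolding J_def Zf_def by (simp add: add.assoc)
  also have "\<dots> = (\<Sum>p\<in>I \<times> J. \<bar>\<mu> (D (fst p) \<inter> Zf (snd p))\<bar>)"
    by (simp add: sum.cartesian_product case_prod_beta)
  also have "\<dots> \<le> TV"
  proof (rule TV_upper)
    show "finite (I \<times> J)" using Fd(1) unfolding J_def by simp
    show "\<forall>i\<in>I \<times> J. D (fst i) \<inter> Zf (snd i) \<subseteq> S" using Fd(2) by auto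
    show "\<forall>p\<in>I \<times> J. \<forall>q\<in>I \<times> J. p \<noteq> q \<longrightarrow> D (fst p) \<inter> Zf (snd p) \<inter> (D (fst q) \<inter> Zf (snd q)) = {}"
    proof (intro ballI impI)
      fix p q assume pq: "p \<in> I \<times> J" "q \<in> I \<times> J" "p \<noteq> q"
      then have "fst p \<noteq> fst q \<or> snd p \<noteq> snd q" by (auto simp: prod_eq_iff)
      then show "D (fst p) \<inter> Zf (snd p) \<inter> (D (fst q) \<inter> Zf (snd q)) = {}"
      proof
        assume "fst p \<noteq> fst q"
        moreover have "fst p \<in> I" "fst q \<in> I" using pq by auto
        ultimately have "D (fst p) \<inter> D (fst q) = {}" using Fd(3) by simp
        then show ?thesis by blast
      next
        assume "snd p \<noteq> snd q"
        moreover have "snd p \<in> J" "snd q \<in> J" using pq by auto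
        ultimately have "Zf (snd p) \<inter> Zf (snd q) = {}" using Zfd by simp
        then show ?thesis by blast
      qed
    qed
    show "(\<Union>p\<in>I \<times> J. D (fst p) \<inter> Zf (snd p)) = S"
    proof
      show "(\<Union>p\<in>I \<times> J. D (fst p) \<inter> Zf (snd p)) \<subseteq> S" using Fd(2) by auto
      show "S \<subseteq> (\<Union>p\<in>I \<times> J. D (fst p) \<inter> Zf (snd p))"
      proof
        fix x assume "x \<in> S"
        then obtain i j where "i \<in> I" "x \<in> D i" "j \<in> J" "x \<in> Zf j" using Fd(4) ZfU by blast
        then show "x \<in> (\<Union>p\<in>I \<times> J. D (fst p) \<inter> Zf (snd p))" by (intro UN_I[of "(i,j)"]) auto
      qed
    qed
  qed
  finally show ?thesis .
qed

lemma add_sub: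
  assumes F: "fineP g \<delta> I D t" and Z: "Z \<subseteq> S" and I': "I' \<subseteq> I"
  shows "\<mu> (\<Union>i\<in>I'. D i \<inter> Z) = (\<Sum>i\<in>I'. \<mu> (D i \<inter> Z))"
proof (rule add_fam)
  have Fd: "finite I" "\<forall>i\<in>I. D i \<subseteq> S" "\<forall>i\<in>I. \<forall>j\<in>I. i \<noteq> j \<longrightarrow> D i \<inter> D j = {}"
    using F unfolding fineP_def by auto
  show "finite I'" using Fd(1) I' by (rule rev_finite_subset)
  show "\<forall>i\<in>I'. D i \<inter> Z \<subseteq> S" using Z by auto
  show "\<forall>i\<in>I'. \<forall>j\<in>I'. i \<noteq> j \<longrightarrow> D i \<inter> Z \<inter> (D j \<inter> Z) = {}"
  proof (intro ballI impI)
    fix i j assume "i \<in> I'" "j \<in> I'" "i \<noteq> j"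
    then have "D i \<inter> D j = {}" using Fd(3) I' by auto
    then show "D i \<inter> Z \<inter> (D j \<inter> Z) = {}" by blast
  qed
qed

lemma add_all:
  assumes F: "fineP g \<delta> I D t" and Z: "Z \<subseteq> S"
  shows "(\<Sum>i\<in>I. \<mu> (D i \<inter> Z)) = \<mu> Z"
proof -
  have "(\<Union>i\<in>I. D i \<inter> Z) = Z" using F Z unfolding fineP_def by auto
  then show ?thesis using add_sub[OF F Z subset_refl] by simp
qed

end

lemma L1: fixes g a \<gamma> :: real assumes "\<gamma> \<le> g" "g \<le> 1" shows "\<gamma> * a - (1 - \<gamma>) * \<bar>a\<bar> \<le> g * a"
proof (cases "0 \<le> a")
  case True
  then have "\<gamma> * a \<le> g * a" using assms by (intro mult_right_mono)
  moreover have "0 \<le> (1 - \<gamma>) * \<bar>a\<bar>" using assms by simp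
  ultimately show ?thesis by linarith
next
  case False
  then have "1 * a \<le> g * a" using assms by (intro mult_right_mono_neg) auto
  then show ?thesis using False by (simp add: algebra_simps)
qed
lemma L2: fixes g a \<gamma> :: real assumes "-1 \<le> g" "g \<le> -\<gamma>" shows "- \<gamma> * a - (1 - \<gamma>) * \<bar>a\<bar> \<le> g * a"
  using L1[of \<gamma> "-g" "-a"] assms by simp
lemma L3: fixes g a :: real assumes "\<bar>g\<bar> \<le> 1" shows "- \<bar>a\<bar> \<le> g * a"
proof -
  have "\<bar>g * a\<bar> \<le> 1 * \<bar>a\<bar>" unfolding abs_mult using assms by (intro mult_right_mono) auto
  then show ?thesis by simp
qed
lemma U1: fixes g a \<gamma> :: real assumes "\<gamma> \<le> g" "g \<le> 1" "0 < \<gamma>" shows "g * a \<le> max a 0"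
proof (cases "0 \<le> a")
  case True
  then have "g * a \<le> 1 * a" using assms by (intro mult_right_mono)
  then show ?thesis by simp
next
  case False
  then have "g * a \<le> 0" using assms by (simp add: mult_nonneg_nonpos)
  then show ?thesis by simp
qed
lemma U2: fixes g a \<gamma> :: real assumes "-1 \<le> g" "g \<le> -\<gamma>" "0 < \<gamma>" shows "g * a \<le> max (-a) 0"
  using U1[of \<gamma> "-g" "-a"] assms by simp
lemma U3: fixes g a \<gamma> :: real assumes "\<bar>g\<bar> \<le> \<gamma>" shows "g * a \<le> \<gamma> * \<bar>a\<bar>"
proof -
  have "\<bar>g * a\<bar> \<le> \<gamma> * \<bar>a\<bar>" unfolding abs_mult using assms by (intro mult_right_mono) auto
  then show ?thesis by simp
qed


lemma ball_lip: "f \<in> Lip0_ball z0 \<Longrightarrow> \<bar>f x - f y\<bar> \<le> dist x y"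
  unfolding Lip0_ball_def by auto

lemma ball_z0: "f \<in> Lip0_ball z0 \<Longrightarrow> f z0 = 0"
  unfolding Lip0_ball_def by auto

lemma sum_mod_shift:
  fixes h :: "nat \<Rightarrow> real"
  assumes "1 \<le> n"
  shows "(\<Sum>i<n. h ((i + 1) mod n)) = (\<Sum>i<n. h i)"
proof -
  obtain m where m: "n = Suc m" using assms by (cases n) auto
  have "(\<Sum>i<Suc m. h ((i + 1) mod Suc m)) = (\<Sum>i<m. h ((i + 1) mod Suc m)) + h ((m + 1) mod Suc m)"
    by simp
  also have "(\<Sum>i<m. h ((i + 1) mod Suc m)) = (\<Sum>i<m. h (Suc i))"
    by (rule sum.cong) auto
  also have "h ((m + 1) mod Suc m) = h 0" by simp
  also have "(\<Sum>i<m. h (Suc i)) + h 0 = (\<Sum>i<Suc m. h i)"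
    using sum.lessThan_Suc_shift[of h m] by (simp only: add.commute)
  finally show ?thesis unfolding m .
qed

lemma ii_to_iii:
  fixes f :: "'a::metric_space \<Rightarrow> real"
  assumes A: "A \<subseteq> Mtilde" and f: "f \<in> Lip0_ball z0"
    and g: "\<forall>(x, y)\<in>A. deLeeuw f (x, y) \<ge> \<gamma>"
  shows "cyc_monotone \<gamma> A"
  unfolding cyc_monotone_def
proof (intro conjI A allI impI)
  fix n :: nat and x y :: "nat \<Rightarrow> 'a"
  assume n: "1 \<le> n" and xy: "\<forall>i<n. (x i, y i) \<in> A"
  have key: "f (x i) - f (y i) \<ge> \<gamma> * dist (x i) (y i)" if "i < n" for i
  proof -
    have "(x i, y i) \<in> A" using xy that by auto
    then have ne: "x i \<noteq> y i" and ge: "\<gamma> \<le> (f (x i) - f (y i)) / dist (x i) (y i)"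
      using A g unfolding Mtilde_def deLeeuw_def by auto
    have dpos: "0 < dist (x i) (y i)" using ne by simp
    from ge dpos show ?thesis by (simp add: le_divide_eq)
  qed
  have trm: "f (y i) - f (y ((i + 1) mod n)) \<le> min (dist (x i) (y ((i + 1) mod n)) - \<gamma> * dist (x i) (y i))
                     (dist (y i) (y ((i + 1) mod n)))" if "i < n" for i
  proof -
    have "\<bar>f (x i) - f (y ((i + 1) mod n))\<bar> \<le> dist (x i) (y ((i + 1) mod n))" by (rule ball_lip[OF f])
    moreover have "\<bar>f (y i) - f (y ((i + 1) mod n))\<bar> \<le> dist (y i) (y ((i + 1) mod n))" by (rule ball_lip[OF f])
    moreover note key[OF that]
    ultimately show ?thesis by (simp add: abs_le_iff)
  qed
  have "0 = (\<Sum>i<n. f (y i) - f (y ((i + 1) mod n)))"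
    using sum_mod_shift[OF n, of "\<lambda>i. f (y i)"] by (simp add: sum_subtractf)
  also have "\<dots> \<le> (\<Sum>i<n. min (dist (x i) (y ((i + 1) mod n)) - \<gamma> * dist (x i) (y i))
                     (dist (y i) (y ((i + 1) mod n))))"
    by (rule sum_mono) (use trm in auto)
  finally show "0 \<le> (\<Sum>i<n. min (dist (x i) (y ((i + 1) mod n)) - \<gamma> * dist (x i) (y i))
                     (dist (y i) (y ((i + 1) mod n))))" .
qed


lemma iii_to_f:
  fixes A :: "('a::metric_space \<times> 'a) set" and z0 :: 'a
  assumes cyc: "cyc_monotone \<gamma> A"
  shows "\<exists>f. f \<in> Lip0_ball z0 \<and> (\<forall>(x, y)\<in>A. deLeeuw f (x, y) \<ge> \<gamma>)"
proof (cases "A = {}")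
  case True
  have "(\<lambda>_. 0) \<in> Lip0_ball z0" unfolding Lip0_ball_def by simp
  then show ?thesis using True by blast
next
  case False
  have AM: "A \<subseteq> Mtilde" using cyc unfolding cyc_monotone_def by (rule conjunct1)
  have cycd: "\<forall>n::nat. \<forall>x y :: nat \<Rightarrow> 'a. n \<ge> 1 \<longrightarrow> (\<forall>i<n. (x i, y i) \<in> A) \<longrightarrow>
        (\<Sum>i<n. min (dist (x i) (y ((i + 1) mod n)) - \<gamma> * dist (x i) (y i))
                     (dist (y i) (y ((i + 1) mod n)))) \<ge> 0"
    using cyc unfolding cyc_monotone_def by (rule conjunct2)
  have cycs: "(\<Sum>i<n. min (dist (x i) (y ((i + 1) mod n)) - \<gamma> * dist (x i) (y i))
                     (dist (y i) (y ((i + 1) mod n)))) \<ge> 0" if "1 \<le> n" "\<forall>i<n. (x i, y i) \<in> A" for n :: nat and x y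
    using mp[OF mp[OF spec[OF spec[OF spec[OF cycd, of n], of x], of y]]] that by blast
  define e where "e x y i = min (dist (x i) (y (Suc i)) - \<gamma> * dist (x i) (y i)) (dist (y i) (y (Suc i)))"
    for x y :: "nat \<Rightarrow> 'a" and i
  define val where "val p n x y = dist p (y 0) + (\<Sum>i<n-1. e x y i) + dist (y (n-1)) z0"
    for p :: 'a and n and x y :: "nat \<Rightarrow> 'a"
  define V where "V p = {val p n x y | n x y. 1 \<le> n \<and> (\<forall>i<n. (x i, y i) \<in> A)}" for p
  define F where "F p = Inf (V p)" for p
  obtain a0 b0 where ab0: "(a0, b0) \<in> A" using False by auto
  have Vne: "V p \<noteq> {}" for p
  proof -
    have "val p 1 (\<lambda>_. a0) (\<lambda>_. b0) \<in> V p" unfolding V_def using ab0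
      by (intro CollectI exI[of _ 1] exI[of _ "\<lambda>_. a0"] exI[of _ "\<lambda>_. b0"]) simp
    then show ?thesis by blast
  qed
  have low: "- dist p z0 \<le> val p n x y" if n: "1 \<le> n" and xy: "\<forall>i<n. (x i, y i) \<in> A" for p and n :: nat and x y
  proof -
    obtain m where m: "n = Suc m" using n by (cases n) auto
    have "0 \<le> (\<Sum>i<Suc m. min (dist (x i) (y ((i + 1) mod Suc m)) - \<gamma> * dist (x i) (y i))
                     (dist (y i) (y ((i + 1) mod Suc m))))" using cycs[OF n xy] unfolding m by simp
    also have "\<dots> = (\<Sum>i<m. min (dist (x i) (y ((i + 1) mod Suc m)) - \<gamma> * dist (x i) (y i))
                     (dist (y i) (y ((i + 1) mod Suc m)))) + min (dist (x m) (y ((m + 1) mod Suc m)) - \<gamma> * dist (x m) (y m))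
                     (dist (y m) (y ((m + 1) mod Suc m)))" by simp
    also have "(\<Sum>i<m. min (dist (x i) (y ((i + 1) mod Suc m)) - \<gamma> * dist (x i) (y i))
                     (dist (y i) (y ((i + 1) mod Suc m)))) = (\<Sum>i<m. e x y i)"
      unfolding e_def by (rule sum.cong) auto
    also have "min (dist (x m) (y ((m + 1) mod Suc m)) - \<gamma> * dist (x m) (y m))
                     (dist (y m) (y ((m + 1) mod Suc m))) \<le> dist (y m) (y 0)" by simp
    finally have 1: "0 \<le> (\<Sum>i<m. e x y i) + dist (y m) (y 0)" by simp
    have 2: "dist (y m) (y 0) \<le> dist (y m) z0 + dist z0 p + dist p (y 0)"
      by (metis add.commute dist_triangle order_trans add_left_mono dist_commute)
    have "val p n x y = dist p (y 0) + (\<Sum>i<m. e x y i) + dist (y m) z0" unfolding val_def m by simp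
    with 1 2 show ?thesis by (simp add: dist_commute)
  qed
  have bdd: "bdd_below (V p)" for p
    unfolding V_def by (rule bdd_belowI[of _ "- dist p z0"]) (use low in blast)
  have Flow: "F p \<le> val p n x y" if "1 \<le> n" "\<forall>i<n. (x i, y i) \<in> A" for p and n :: nat and x y
    unfolding F_def
  proof (rule cInf_lower[OF _ bdd])
    show "val p n x y \<in> V p" unfolding V_def using that by blast
  qed
  have Flip: "F p \<le> F q + dist p q" for p q
  proof -
    have "F p - dist p q \<le> F q" unfolding F_def[of q]
    proof (rule cInf_greatest[OF Vne])
      fix v assume "v \<in> V q"
      then obtain n x y where v: "v = val q n x y" "1 \<le> n" "\<forall>i<n. (x i, y i) \<in> A"
        unfolding V_def by blast
      have "dist p (y 0) \<le> dist p q + dist q (y 0)" by (rule dist_triangle)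
      then have "val p n x y \<le> v + dist p q" unfolding v(1) val_def by simp
      moreover have "F p \<le> val p n x y" by (rule Flow[OF v(2,3)])
      ultimately show "F p - dist p q \<le> v" by simp
    qed
    then show ?thesis by simp
  qed
  have key: "F b + \<gamma> * dist a b \<le> F a" if ab: "(a, b) \<in> A" for a b
    unfolding F_def[of a]
  proof (rule cInf_greatest[OF Vne])
    fix v assume "v \<in> V a"
    then obtain n x y where v: "v = val a n x y" "1 \<le> n" "\<forall>i<n. (x i, y i) \<in> A"
      unfolding V_def by blast
    obtain m where m: "n = Suc m" using v(2) by (cases n) auto
    define x' where "x' i = (if i = 0 then a else x (i - 1))" for i
    define y' where "y' i = (if i = 0 then b else y (i - 1))" for i
    have c': "\<forall>i<Suc n. (x' i, y' i) \<in> A" unfolding x'_def y'_def using v(3) ab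
      by (auto simp: less_Suc_eq_0_disj)
    have "F b \<le> val b (Suc n) x' y'" by (rule Flow) (use c' in auto)
    also have "val b (Suc n) x' y' = (\<Sum>i<Suc m. e x' y' i) + dist (y m) z0"
      unfolding val_def m y'_def by simp
    also have "(\<Sum>i<Suc m. e x' y' i) = e x' y' 0 + (\<Sum>i<m. e x' y' (Suc i))"
      by (rule sum.lessThan_Suc_shift)
    also have "(\<Sum>i<m. e x' y' (Suc i)) = (\<Sum>i<m. e x y i)"
      unfolding e_def x'_def y'_def by simp
    also have "e x' y' 0 \<le> dist a (y 0) - \<gamma> * dist a b"
      unfolding e_def x'_def y'_def by simp
    finally have 1: "F b \<le> dist a (y 0) - \<gamma> * dist a b + (\<Sum>i<m. e x y i) + dist (y m) z0" by simp
    have 2: "dist a (y 0) + (\<Sum>i<m. e x y i) + dist (y m) z0 = v" unfolding v(1) val_def m by simp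
    from 1 2 show "F b + \<gamma> * dist a b \<le> v" by linarith
  qed
  define f where "f p = F p - F z0" for p
  have "f \<in> Lip0_ball z0" unfolding Lip0_ball_def
  proof (intro CollectI conjI allI)
    show "f z0 = 0" unfolding f_def by simp
    fix p q
    show "\<bar>f p - f q\<bar> \<le> dist p q" unfolding f_def
      using Flip[of p q] Flip[of q p] by (simp add: dist_commute abs_le_iff)
  qed
  moreover have "\<forall>(x, y)\<in>A. deLeeuw f (x, y) \<ge> \<gamma>"
  proof (intro ballI, clarify)
    fix a b assume ab: "(a, b) \<in> A"
    then have "a \<noteq> b" using AM unfolding Mtilde_def by auto
    then have dpos: "0 < dist a b" by simp
    have "\<gamma> * dist a b \<le> f a - f b" using key[OF ab] unfolding f_def by simp
    then show "\<gamma> \<le> deLeeuw f (a, b)" unfolding deLeeuw_def using dpos by (simp add: le_divide_eq)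
  qed
  ultimately show ?thesis by blast
qed


lemma deLeeuw_bd: "f \<in> Lip0_ball z0 \<Longrightarrow> \<bar>deLeeuw f p\<bar> \<le> 1"
proof -
  assume f: "f \<in> Lip0_ball z0"
  obtain x y where p: "p = (x, y)" by (cases p)
  show ?thesis
  proof (cases "x = y")
    case True then show ?thesis unfolding p deLeeuw_def by simp
  next
    case False
    then have d: "0 < dist x y" by simp
    have "\<bar>f x - f y\<bar> \<le> dist x y" by (rule ball_lip[OF f])
    then show ?thesis unfolding p deLeeuw_def using d by (simp add: abs_divide divide_le_eq_1)
  qed
qed

lemma deLeeuw_flip: "deLeeuw f (flip_pair p) = - deLeeuw f p"
  by (cases p) (simp add: deLeeuw_def flip_pair_def dist_commute minus_divide_left)

lemma deLeeuw_neg: "deLeeuw (\<lambda>x. - f x) = (\<lambda>p. - deLeeuw f p)"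
  by (rule ext, case_tac p) (simp add: deLeeuw_def minus_divide_left)

lemma neg_ball: "f \<in> Lip0_ball z0 \<Longrightarrow> (\<lambda>x. - f x) \<in> Lip0_ball z0"
  unfolding Lip0_ball_def by (auto simp: abs_minus_commute)

lemma zero_ball: "(\<lambda>_. 0) \<in> Lip0_ball z0"
  unfolding Lip0_ball_def by simp

lemma flip_Mtilde: "p \<in> Mtilde \<Longrightarrow> flip_pair p \<in> Mtilde"
  by (cases p) (auto simp: Mtilde_def flip_pair_def)

lemma flip_flip: "flip_pair (flip_pair p) = p"
  by (cases p) (simp add: flip_pair_def)

lemma D_facts:
  fixes \<mu> :: "('a::metric_space \<times> 'a) set \<Rightarrow> real" and z0 :: 'a
  assumes ba: "ba_measure Mtilde \<mu>"
  shows "dual_norm_Phi_star z0 \<mu> \<le> total_variation \<mu> Mtilde"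
    and "f \<in> Lip0_ball z0 \<Longrightarrow> \<bar>ba_integral Mtilde \<mu> (deLeeuw f)\<bar> \<le> dual_norm_Phi_star z0 \<mu>"
proof -
  interpret bam Mtilde \<mu> by unfold_locales (rule ba)
  define Y where "Y = {\<bar>ba_integral Mtilde \<mu> (deLeeuw f)\<bar> | f. f \<in> Lip0_ball z0}"
  have ub: "y \<le> TV" if "y \<in> Y" for y
  proof -
    obtain f where f: "y = \<bar>ba_integral Mtilde \<mu> (deLeeuw f)\<bar>" "f \<in> Lip0_ball z0"
      using \<open>y \<in> Y\<close> unfolding Y_def by blast
    show ?thesis unfolding f(1) by (rule integral_bound) (use deLeeuw_bd[OF f(2)] in blast)
  qed
  have ne: "Y \<noteq> {}" unfolding Y_def using zero_ball by blast
  show "dual_norm_Phi_star z0 \<mu> \<le> total_variation \<mu> Mtilde"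
    unfolding dual_norm_Phi_star_def Y_def[symmetric] TV_def[symmetric]
    using ne ub by (rule cSup_least)
  assume f: "f \<in> Lip0_ball z0"
  show "\<bar>ba_integral Mtilde \<mu> (deLeeuw f)\<bar> \<le> dual_norm_Phi_star z0 \<mu>"
    unfolding dual_norm_Phi_star_def Y_def[symmetric]
  proof (rule cSup_upper)
    show "\<bar>ba_integral Mtilde \<mu> (deLeeuw f)\<bar> \<in> Y" unfolding Y_def using f by blast
    show "bdd_above Y" using ub by (rule bdd_aboveI)
  qed
qed


lemma pos_part_bdd:
  fixes \<mu> :: "'b set \<Rightarrow> real"
  assumes ba: "ba_measure S \<mu>" and A: "A \<subseteq> S"
  shows "{\<mu> F | F. F \<subseteq> A} \<noteq> {}" "bdd_above {\<mu> F | F. F \<subseteq> A}"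
    "{- \<mu> F | F. F \<subseteq> A} \<noteq> {}" "bdd_above {- \<mu> F | F. F \<subseteq> A}"
proof -
  interpret bam S \<mu> by unfold_locales (rule ba)
  show "{\<mu> F | F. F \<subseteq> A} \<noteq> {}" by blast
  show "{- \<mu> F | F. F \<subseteq> A} \<noteq> {}" by blast
  show "bdd_above {\<mu> F | F. F \<subseteq> A}"
  proof (rule bdd_aboveI[of _ Cb])
    fix x assume "x \<in> {\<mu> F | F. F \<subseteq> A}"
    then obtain F where F: "x = \<mu> F" "F \<subseteq> A" by blast
    then have "\<bar>\<mu> F\<bar> \<le> Cb" using A by (intro Cb) auto
    then show "x \<le> Cb" using F by (simp add: abs_le_iff)
  qed
  show "bdd_above {- \<mu> F | F. F \<subseteq> A}"
  proof (rule bdd_aboveI[of _ Cb])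
    fix x assume "x \<in> {- \<mu> F | F. F \<subseteq> A}"
    then obtain F where F: "x = - \<mu> F" "F \<subseteq> A" by blast
    then have "\<bar>\<mu> F\<bar> \<le> Cb" using A by (intro Cb) auto
    then show "x \<le> Cb" using F by (simp add: abs_le_iff)
  qed
qed

lemma pos_part_approx:
  fixes \<mu> :: "'b set \<Rightarrow> real"
  assumes ba: "ba_measure S \<mu>" and A: "A \<subseteq> S" and e: "0 < e"
  shows "\<exists>F. F \<subseteq> A \<and> pos_part \<mu> A - e < \<mu> F"
proof -
  have "pos_part \<mu> A - e < Sup {\<mu> F | F. F \<subseteq> A}" unfolding pos_part_def using e by simp
  then have "\<exists>x\<in>{\<mu> F | F. F \<subseteq> A}. pos_part \<mu> A - e < x"
    using less_cSup_iff[OF pos_part_bdd(1,2)[OF ba A]] by blast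
  then show ?thesis by blast
qed

lemma neg_part_approx:
  fixes \<mu> :: "'b set \<Rightarrow> real"
  assumes ba: "ba_measure S \<mu>" and A: "A \<subseteq> S" and e: "0 < e"
  shows "\<exists>F. F \<subseteq> A \<and> neg_part \<mu> A - e < - \<mu> F"
proof -
  have "neg_part \<mu> A - e < Sup {- \<mu> F | F. F \<subseteq> A}" unfolding neg_part_def using e by simp
  then have "\<exists>x\<in>{- \<mu> F | F. F \<subseteq> A}. neg_part \<mu> A - e < x"
    using less_cSup_iff[OF pos_part_bdd(3,4)[OF ba A]] by blast
  then show ?thesis by blast
qed

lemma pos_part_ge:
  fixes \<mu> :: "'b set \<Rightarrow> real"
  assumes ba: "ba_measure S \<mu>" and A: "A \<subseteq> S" and F: "F \<subseteq> A"
  shows "\<mu> F \<le> pos_part \<mu> A" "- \<mu> F \<le> neg_part \<mu> A"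
proof -
  show "\<mu> F \<le> pos_part \<mu> A" unfolding pos_part_def
    by (rule cSup_upper[OF _ pos_part_bdd(2)[OF ba A]]) (use F in blast)
  show "- \<mu> F \<le> neg_part \<mu> A" unfolding neg_part_def
    by (rule cSup_upper[OF _ pos_part_bdd(4)[OF ba A]]) (use F in blast)
qed

lemma lower_est:
  fixes \<mu> :: "('a::metric_space \<times> 'a) set \<Rightarrow> real" and z0 :: 'a
  assumes ba: "ba_measure Mtilde \<mu>" and \<gamma>: "0 < \<gamma>" "\<gamma> < 1"
    and A: "A \<subseteq> Mtilde" and f: "f \<in> Lip0_ball z0"
    and gA: "\<forall>(x, y)\<in>A. deLeeuw f (x, y) \<ge> \<gamma>"
    and e: "0 < \<epsilon>" and d: "0 < \<delta>"
  shows "2 * \<gamma> * (pos_part \<mu> A + neg_part \<mu> (flip_pair ` A) - 2 * \<epsilon>)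
           - total_variation \<mu> Mtilde - \<delta> * total_variation \<mu> Mtilde
         \<le> ba_integral Mtilde \<mu> (deLeeuw f)"
proof -
  interpret bam Mtilde \<mu> by unfold_locales (rule ba)
  define g where "g = deLeeuw f"
  have bd: "\<forall>u\<in>Mtilde. \<bar>g u\<bar> \<le> 1" unfolding g_def using deLeeuw_bd[OF f] by blast
  have fA: "flip_pair ` A \<subseteq> Mtilde" using A flip_Mtilde by blast
  obtain F where F: "F \<subseteq> A" "pos_part \<mu> A - \<epsilon> < \<mu> F" using pos_part_approx[OF ba A e] by blast
  obtain G where G: "G \<subseteq> flip_pair ` A" "neg_part \<mu> (flip_pair ` A) - \<epsilon> < - \<mu> G"
    using neg_part_approx[OF ba fA e] by blast
  have gF: "\<gamma> \<le> g u" if "u \<in> F" for u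
  proof -
    have "u \<in> A" using that F(1) by auto
    then show ?thesis using gA unfolding g_def by (cases u) auto
  qed
  have gG: "g u \<le> - \<gamma>" if uG: "u \<in> G" for u
  proof -
    obtain q where q: "q \<in> A" "u = flip_pair q" using uG G(1) by blast
    have "\<gamma> \<le> g q" using gA q(1) unfolding g_def by (cases q) auto
    then show ?thesis unfolding q(2) g_def deLeeuw_flip by (simp add: g_def)
  qed
  have FS: "F \<subseteq> Mtilde" using F(1) A by auto
  have GS: "G \<subseteq> Mtilde" using G(1) fA by auto
  have FG: "F \<inter> G = {}"
  proof (rule ccontr)
    assume "F \<inter> G \<noteq> {}"
    then obtain u where u: "u \<in> F" "u \<in> G" by blast
    have "\<gamma> \<le> g u" "g u \<le> - \<gamma>" using gF[OF u(1)] gG[OF u(2)] .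
    with \<gamma> show False by linarith
  qed
  obtain P t where P: "fineP g \<delta> P (id :: ('a \<times> 'a) set \<Rightarrow> ('a \<times> 'a) set) t"
    using fine_exists[OF bd d] by blast
  define R where "R = Mtilde - F - G"
  have Z: "F \<subseteq> Mtilde" "G \<subseteq> Mtilde" "R \<subseteq> Mtilde" "F \<inter> G = {}" "F \<inter> R = {}" "G \<inter> R = {}"
       "F \<union> G \<union> R = Mtilde" using FS GS FG unfolding R_def by auto
  obtain t0 t1 t2 where tt: "\<forall>i\<in>P. id i \<inter> F \<noteq> {} \<longrightarrow> t0 i \<in> id i \<inter> F"
     "\<forall>i\<in>P. id i \<inter> G \<noteq> {} \<longrightarrow> t1 i \<in> id i \<inter> G"
     "\<forall>i\<in>P. id i \<inter> R \<noteq> {} \<longrightarrow> t2 i \<in> id i \<inter> R"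
     and app: "\<bar>ba_integral Mtilde \<mu> g - (\<Sum>i\<in>P. g (t0 i) * \<mu> (id i \<inter> F) + g (t1 i) * \<mu> (id i \<inter> G)
         + g (t2 i) * \<mu> (id i \<inter> R))\<bar> \<le> \<delta> * TV"
    using refine3[OF bd P Z] by blast
  have tv3: "(\<Sum>i\<in>P. \<bar>\<mu> (id i \<inter> F)\<bar> + \<bar>\<mu> (id i \<inter> G)\<bar> + \<bar>\<mu> (id i \<inter> R)\<bar>) \<le> TV"
    by (rule TV3[OF P Z])
  have sF: "(\<Sum>i\<in>P. \<mu> (id i \<inter> F)) = \<mu> F" by (rule add_all[OF P FS])
  have sG: "(\<Sum>i\<in>P. \<mu> (id i \<inter> G)) = \<mu> G" by (rule add_all[OF P GS])
  define a where "a i = \<mu> (id i \<inter> F)" for i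
  define b where "b i = \<mu> (id i \<inter> G)" for i
  define c where "c i = \<mu> (id i \<inter> R)" for i
  have t0: "\<gamma> * a i - (1 - \<gamma>) * \<bar>a i\<bar> \<le> g (t0 i) * a i" if "i \<in> P" for i
  proof (cases "id i \<inter> F = {}")
    case True then show ?thesis unfolding a_def by (simp add: mu_empty)
  next
    case False
    then have u: "t0 i \<in> F" using tt(1) that by auto
    have "\<bar>g (t0 i)\<bar> \<le> 1" using bd u FS by blast
    then have "g (t0 i) \<le> 1" by (simp add: abs_le_iff)
    then show ?thesis using L1[of \<gamma> "g (t0 i)" "a i"] gF[OF u] by blast
  qed
  have t1: "- \<gamma> * b i - (1 - \<gamma>) * \<bar>b i\<bar> \<le> g (t1 i) * b i" if "i \<in> P" for i
  proof (cases "id i \<inter> G = {}")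
    case True then show ?thesis unfolding b_def by (simp add: mu_empty)
  next
    case False
    then have u: "t1 i \<in> G" using tt(2) that by auto
    have "\<bar>g (t1 i)\<bar> \<le> 1" using bd u GS by blast
    then have "- 1 \<le> g (t1 i)" by (simp add: abs_le_iff)
    then show ?thesis using L2[of "g (t1 i)" \<gamma> "b i"] gG[OF u] by blast
  qed
  have t2: "- \<bar>c i\<bar> \<le> g (t2 i) * c i" if "i \<in> P" for i
  proof (cases "id i \<inter> R = {}")
    case True then show ?thesis unfolding c_def by (simp add: mu_empty)
  next
    case False
    then have u: "t2 i \<in> R" using tt(3) that by auto
    have "\<bar>g (t2 i)\<bar> \<le> 1" using bd u Z(3) by blast
    then show ?thesis using L3[of "g (t2 i)" "c i"] by blast
  qed
  have "(\<Sum>i\<in>P. (\<gamma> * a i - (1 - \<gamma>) * \<bar>a i\<bar>) + (- \<gamma> * b i - (1 - \<gamma>) * \<bar>b i\<bar>) + (- \<bar>c i\<bar>))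
      \<le> (\<Sum>i\<in>P. g (t0 i) * a i + g (t1 i) * b i + g (t2 i) * c i)"
    by (rule sum_mono) (use t0 t1 t2 in \<open>intro add_mono\<close>)
  moreover have "(\<Sum>i\<in>P. (\<gamma> * a i - (1 - \<gamma>) * \<bar>a i\<bar>) + (- \<gamma> * b i - (1 - \<gamma>) * \<bar>b i\<bar>) + (- \<bar>c i\<bar>))
      = \<gamma> * (\<Sum>i\<in>P. a i) - (1 - \<gamma>) * (\<Sum>i\<in>P. \<bar>a i\<bar>) - \<gamma> * (\<Sum>i\<in>P. b i) - (1 - \<gamma>) * (\<Sum>i\<in>P. \<bar>b i\<bar>)
        - (\<Sum>i\<in>P. \<bar>c i\<bar>)"
    by (simp add: sum.distrib sum_subtractf sum_distrib_left sum_negf)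
  ultimately have low: "\<gamma> * (\<Sum>i\<in>P. a i) - (1 - \<gamma>) * (\<Sum>i\<in>P. \<bar>a i\<bar>) - \<gamma> * (\<Sum>i\<in>P. b i) - (1 - \<gamma>) * (\<Sum>i\<in>P. \<bar>b i\<bar>)
        - (\<Sum>i\<in>P. \<bar>c i\<bar>) \<le> (\<Sum>i\<in>P. g (t0 i) * a i + g (t1 i) * b i + g (t2 i) * c i)" by simp
  define SA where "SA = (\<Sum>i\<in>P. \<bar>a i\<bar>)"
  define SB where "SB = (\<Sum>i\<in>P. \<bar>b i\<bar>)"
  define SC where "SC = (\<Sum>i\<in>P. \<bar>c i\<bar>)"
  define X where "X = \<mu> F - \<mu> G"
  have tvs: "SA + SB + SC \<le> TV" using tv3 unfolding SA_def SB_def SC_def a_def b_def c_def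
    by (simp add: sum.distrib)
  have SAg: "\<mu> F \<le> SA" unfolding SA_def sF[symmetric] a_def by (rule sum_mono) simp
  have SBg: "- \<mu> G \<le> SB" unfolding SB_def sG[symmetric] a_def sum_negf[symmetric] b_def
    by (rule sum_mono) simp
  have m1: "\<gamma> * X \<le> \<gamma> * (SA + SB)" using SAg SBg \<gamma> unfolding X_def by (intro mult_left_mono) auto
  have low2: "\<gamma> * X - (SA + SB) + \<gamma> * (SA + SB) - SC \<le> (\<Sum>i\<in>P. g (t0 i) * a i + g (t1 i) * b i + g (t2 i) * c i)"
  proof -
    have sa: "sum a P = \<mu> F" unfolding a_def using sF by simp
    have sb: "sum b P = \<mu> G" unfolding b_def using sG by simp
    show ?thesis using low unfolding SA_def[symmetric] SB_def[symmetric] SC_def[symmetric] sa sb X_def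
      by (simp add: algebra_simps)
  qed
  have Xg: "pos_part \<mu> A + neg_part \<mu> (flip_pair ` A) - 2 * \<epsilon> \<le> X" using F(2) G(2) unfolding X_def by simp
  have m2: "2 * \<gamma> * (pos_part \<mu> A + neg_part \<mu> (flip_pair ` A) - 2 * \<epsilon>) \<le> 2 * \<gamma> * X"
    using Xg \<gamma> by (intro mult_left_mono) auto
  have app2: "(\<Sum>i\<in>P. g (t0 i) * a i + g (t1 i) * b i + g (t2 i) * c i) - \<delta> * TV \<le> ba_integral Mtilde \<mu> g"
    using app unfolding a_def b_def c_def by (simp add: abs_le_iff)
  from m1 m2 low2 app2 tvs show ?thesis unfolding g_def TV_def by linarith
qed


lemma upper_est:
  fixes \<mu> :: "('a::metric_space \<times> 'a) set \<Rightarrow> real" and z0 :: 'a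
  assumes ba: "ba_measure Mtilde \<mu>" and \<gamma>: "0 < \<gamma>" "\<gamma> < 1"
    and f: "f \<in> Lip0_ball z0" and d: "0 < \<delta>"
  shows "\<exists>A. A \<subseteq> Mtilde \<and> (\<forall>(x, y)\<in>A. deLeeuw f (x, y) \<ge> \<gamma>) \<and>
     ba_integral Mtilde \<mu> (deLeeuw f) - \<gamma> * total_variation \<mu> Mtilde - \<delta> * total_variation \<mu> Mtilde
       \<le> (1 - \<gamma>) * (pos_part \<mu> A + neg_part \<mu> (flip_pair ` A))"
proof -
  interpret bam Mtilde \<mu> by unfold_locales (rule ba)
  define g where "g = deLeeuw f"
  have bd: "\<forall>u\<in>Mtilde. \<bar>g u\<bar> \<le> 1" unfolding g_def using deLeeuw_bd[OF f] by blast
  define A where "A = {p\<in>Mtilde. \<gamma> \<le> g p}"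
  define N where "N = {p\<in>Mtilde. g p \<le> - \<gamma>}"
  define R where "R = Mtilde - A - N"
  have AS: "A \<subseteq> Mtilde" unfolding A_def by auto
  have NS: "N \<subseteq> Mtilde" unfolding N_def by auto
  have fA: "flip_pair ` A \<subseteq> Mtilde" using AS flip_Mtilde by blast
  have Nf: "N \<subseteq> flip_pair ` A"
  proof
    fix p assume p: "p \<in> N"
    then have pM: "p \<in> Mtilde" and gp: "g p \<le> - \<gamma>" unfolding N_def by auto
    have "flip_pair p \<in> Mtilde" by (rule flip_Mtilde[OF pM])
    moreover have "\<gamma> \<le> g (flip_pair p)" unfolding g_def deLeeuw_flip using gp unfolding g_def by simp
    ultimately have "flip_pair p \<in> Mtilde" "\<gamma> \<le> g (flip_pair p)" .
    then have "flip_pair p \<in> A" unfolding A_def by simp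
    then show "p \<in> flip_pair ` A" using flip_flip[of p] by (metis image_eqI)
  qed
  have AN: "A \<inter> N = {}" unfolding A_def N_def using \<gamma> by auto
  have Z: "A \<subseteq> Mtilde" "N \<subseteq> Mtilde" "R \<subseteq> Mtilde" "A \<inter> N = {}" "A \<inter> R = {}" "N \<inter> R = {}"
       "A \<union> N \<union> R = Mtilde" using AS NS AN unfolding R_def by auto
  obtain P t where P: "fineP g \<delta> P (id :: ('a \<times> 'a) set \<Rightarrow> ('a \<times> 'a) set) t"
    using fine_exists[OF bd d] by blast
  have finP: "finite P" using P unfolding fineP_def by auto
  obtain t0 t1 t2 where tt: "\<forall>i\<in>P. id i \<inter> A \<noteq> {} \<longrightarrow> t0 i \<in> id i \<inter> A"
     "\<forall>i\<in>P. id i \<inter> N \<noteq> {} \<longrightarrow> t1 i \<in> id i \<inter> N"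
     "\<forall>i\<in>P. id i \<inter> R \<noteq> {} \<longrightarrow> t2 i \<in> id i \<inter> R"
     and app: "\<bar>ba_integral Mtilde \<mu> g - (\<Sum>i\<in>P. g (t0 i) * \<mu> (id i \<inter> A) + g (t1 i) * \<mu> (id i \<inter> N)
         + g (t2 i) * \<mu> (id i \<inter> R))\<bar> \<le> \<delta> * TV"
    using refine3[OF bd P Z] by blast
  have tv3: "(\<Sum>i\<in>P. \<bar>\<mu> (id i \<inter> A)\<bar> + \<bar>\<mu> (id i \<inter> N)\<bar> + \<bar>\<mu> (id i \<inter> R)\<bar>) \<le> TV"
    by (rule TV3[OF P Z])
  define a where "a i = \<mu> (id i \<inter> A)" for i
  define b where "b i = \<mu> (id i \<inter> N)" for i
  define c where "c i = \<mu> (id i \<inter> R)" for i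
  have t0: "g (t0 i) * a i \<le> max (a i) 0" if "i \<in> P" for i
  proof (cases "id i \<inter> A = {}")
    case True then show ?thesis unfolding a_def by (simp add: mu_empty)
  next
    case False
    then have u: "t0 i \<in> A" using tt(1) that by auto
    have "\<bar>g (t0 i)\<bar> \<le> 1" using bd u AS by blast
    then have "g (t0 i) \<le> 1" by (simp add: abs_le_iff)
    moreover have "\<gamma> \<le> g (t0 i)" using u unfolding A_def by simp
    ultimately show ?thesis using U1[of \<gamma> "g (t0 i)" "a i"] \<gamma> by blast
  qed
  have t1: "g (t1 i) * b i \<le> max (- b i) 0" if "i \<in> P" for i
  proof (cases "id i \<inter> N = {}")
    case True then show ?thesis unfolding b_def by (simp add: mu_empty)
  next
    case False
    then have u: "t1 i \<in> N" using tt(2) that by auto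
    have "\<bar>g (t1 i)\<bar> \<le> 1" using bd u NS by blast
    then have "- 1 \<le> g (t1 i)" by (simp add: abs_le_iff)
    moreover have "g (t1 i) \<le> - \<gamma>" using u unfolding N_def by simp
    ultimately show ?thesis using U2[of "g (t1 i)" \<gamma> "b i"] \<gamma> by blast
  qed
  have t2: "g (t2 i) * c i \<le> \<gamma> * \<bar>c i\<bar>" if "i \<in> P" for i
  proof (cases "id i \<inter> R = {}")
    case True then show ?thesis unfolding c_def by (simp add: mu_empty)
  next
    case False
    then have u: "t2 i \<in> R" using tt(3) that by auto
    then have "\<bar>g (t2 i)\<bar> \<le> \<gamma>" unfolding R_def A_def N_def by auto
    then show ?thesis using U3[of "g (t2 i)" \<gamma> "c i"] by blast
  qed
  define SA where "SA = (\<Sum>i\<in>P. \<bar>a i\<bar>)"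
  define SB where "SB = (\<Sum>i\<in>P. \<bar>b i\<bar>)"
  define SC where "SC = (\<Sum>i\<in>P. \<bar>c i\<bar>)"
  define pA where "pA = (\<Sum>i\<in>P. max (a i) 0)"
  define pB where "pB = (\<Sum>i\<in>P. max (- b i) 0)"
  have up: "(\<Sum>i\<in>P. g (t0 i) * a i + g (t1 i) * b i + g (t2 i) * c i) \<le> pA + pB + \<gamma> * SC"
  proof -
    have "(\<Sum>i\<in>P. g (t0 i) * a i + g (t1 i) * b i + g (t2 i) * c i)
        \<le> (\<Sum>i\<in>P. max (a i) 0 + max (- b i) 0 + \<gamma> * \<bar>c i\<bar>)"
      by (rule sum_mono) (use t0 t1 t2 in \<open>intro add_mono\<close>)
    also have "\<dots> = pA + pB + \<gamma> * SC" unfolding pA_def pB_def SC_def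
      by (simp add: sum.distrib sum_distrib_left)
    finally show ?thesis .
  qed
  have tvs: "SA + SB + SC \<le> TV" using tv3 unfolding SA_def SB_def SC_def a_def b_def c_def
    by (simp add: sum.distrib)
  have pAS: "pA \<le> SA" unfolding pA_def SA_def by (rule sum_mono) simp
  have pBS: "pB \<le> SB" unfolding pB_def SB_def by (rule sum_mono) simp
  have g1: "\<gamma> * SC \<le> \<gamma> * (TV - pA - pB)" using tvs pAS pBS \<gamma> by (intro mult_left_mono) auto
  define Ip where "Ip = {i\<in>P. 0 < a i}"
  define In where "In = {i\<in>P. b i < 0}"
  define Fs where "Fs = (\<Union>i\<in>Ip. id i \<inter> A)"
  define Gs where "Gs = (\<Union>i\<in>In. id i \<inter> N)"
  have muF: "\<mu> Fs = pA"
  proof -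
    have "\<mu> Fs = (\<Sum>i\<in>Ip. a i)" unfolding Fs_def a_def by (rule add_sub[OF P AS]) (auto simp: Ip_def)
    also have "\<dots> = (\<Sum>i\<in>P. if 0 < a i then a i else 0)" unfolding Ip_def
      by (rule sum.inter_filter[OF finP])
    also have "\<dots> = pA" unfolding pA_def by (rule sum.cong) auto
    finally show ?thesis .
  qed
  have muG: "- \<mu> Gs = pB"
  proof -
    have "\<mu> Gs = (\<Sum>i\<in>In. b i)" unfolding Gs_def b_def by (rule add_sub[OF P NS]) (auto simp: In_def)
    also have "\<dots> = (\<Sum>i\<in>P. if b i < 0 then b i else 0)" unfolding In_def
      by (rule sum.inter_filter[OF finP])
    finally have "- \<mu> Gs = (\<Sum>i\<in>P. - (if b i < 0 then b i else 0))" by (simp add: sum_negf)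
    also have "\<dots> = pB" unfolding pB_def by (rule sum.cong) auto
    finally show ?thesis .
  qed
  have FsA: "Fs \<subseteq> A" unfolding Fs_def by auto
  have GsA: "Gs \<subseteq> flip_pair ` A" using Nf unfolding Gs_def by auto
  have pp: "pA \<le> pos_part \<mu> A" using pos_part_ge(1)[OF ba AS FsA] muF by simp
  have nn: "pB \<le> neg_part \<mu> (flip_pair ` A)" using pos_part_ge(2)[OF ba fA GsA] muG by simp
  have m: "(1 - \<gamma>) * (pA + pB) \<le> (1 - \<gamma>) * (pos_part \<mu> A + neg_part \<mu> (flip_pair ` A))"
    using pp nn \<gamma> by (intro mult_left_mono) auto
  have app2: "ba_integral Mtilde \<mu> g \<le> (\<Sum>i\<in>P. g (t0 i) * a i + g (t1 i) * b i + g (t2 i) * c i) + \<delta> * TV"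
    using app unfolding a_def b_def c_def by (simp add: abs_le_iff)
  have fin: "ba_integral Mtilde \<mu> g - \<gamma> * TV - \<delta> * TV \<le> (1 - \<gamma>) * (pA + pB)"
    using app2 up g1 by (simp add: algebra_simps)
  show ?thesis
  proof (intro exI conjI)
    show "A \<subseteq> Mtilde" by (rule AS)
    show "\<forall>(x, y)\<in>A. \<gamma> \<le> deLeeuw f (x, y)" unfolding A_def g_def by auto
    show "ba_integral Mtilde \<mu> (deLeeuw f) - \<gamma> * total_variation \<mu> Mtilde - \<delta> * total_variation \<mu> Mtilde
       \<le> (1 - \<gamma>) * (pos_part \<mu> A + neg_part \<mu> (flip_pair ` A))"
      using fin m unfolding g_def TV_def by linarith
  qed
qed


theorem theorem2p3:
  fixes z0 :: "'a::metric_space"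
    and \<mu> :: "('a \<times> 'a) set \<Rightarrow> real"
  assumes "ba_measure Mtilde \<mu>"
  shows "(dual_norm_Phi_star z0 \<mu> = ba_norm Mtilde \<mu>
           \<longleftrightarrow> (\<forall>\<gamma>. 0 < \<gamma> \<and> \<gamma> < 1 \<longrightarrow>
                  (\<exists>A f. A \<subseteq> Mtilde \<and> f \<in> Lip0_ball z0 \<and>
                     pos_part \<mu> A + neg_part \<mu> (flip_pair ` A) \<ge> \<gamma> * total_variation \<mu> Mtilde \<and>
                     (\<forall>(x, y)\<in>A. deLeeuw f (x, y) \<ge> \<gamma>))))
       \<and> (dual_norm_Phi_star z0 \<mu> = ba_norm Mtilde \<mu>
           \<longleftrightarrow> (\<forall>\<gamma>. 0 < \<gamma> \<and> \<gamma> < 1 \<longrightarrow>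
                  (\<exists>A. A \<subseteq> Mtilde \<and> cyc_monotone \<gamma> A \<and>
                     pos_part \<mu> A + neg_part \<mu> (flip_pair ` A) \<ge> \<gamma> * total_variation \<mu> Mtilde)))"
proof -
  note ba = assms
  interpret bam Mtilde \<mu> by unfold_locales (rule ba)
  define D where "D = dual_norm_Phi_star z0 \<mu>"
  define T where "T = total_variation \<mu> Mtilde"
  have TTV: "T = TV" unfolding T_def TV_def ..
  have T0: "0 \<le> T" using TV_nonneg TTV by simp
  have bn: "ba_norm Mtilde \<mu> = T" unfolding ba_norm_def T_def ..
  have DT: "D \<le> T" unfolding D_def T_def by (rule D_facts(1)[OF ba])
  have ID: "\<bar>ba_integral Mtilde \<mu> (deLeeuw f)\<bar> \<le> D" if "f \<in> Lip0_ball z0" for f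
    unfolding D_def by (rule D_facts(2)[OF ba that])
  define P2 where "P2 = (\<forall>\<gamma>. 0 < \<gamma> \<and> \<gamma> < 1 \<longrightarrow>
                  (\<exists>A f. A \<subseteq> Mtilde \<and> f \<in> Lip0_ball z0 \<and>
                     pos_part \<mu> A + neg_part \<mu> (flip_pair ` A) \<ge> \<gamma> * T \<and>
                     (\<forall>(x, y)\<in>A. deLeeuw f (x, y) \<ge> \<gamma>)))"
  define P3 where "P3 = (\<forall>\<gamma>. 0 < \<gamma> \<and> \<gamma> < 1 \<longrightarrow>
                  (\<exists>A. A \<subseteq> Mtilde \<and> cyc_monotone \<gamma> A \<and>
                     pos_part \<mu> A + neg_part \<mu> (flip_pair ` A) \<ge> \<gamma> * T))"
  have ii_iii: "P3" if P2
    unfolding P3_def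
  proof (intro allI impI)
    fix \<gamma> :: real assume g: "0 < \<gamma> \<and> \<gamma> < 1"
    then obtain A f where Af: "A \<subseteq> Mtilde" "f \<in> Lip0_ball z0"
        "pos_part \<mu> A + neg_part \<mu> (flip_pair ` A) \<ge> \<gamma> * T" "\<forall>(x, y)\<in>A. deLeeuw f (x, y) \<ge> \<gamma>"
      using \<open>P2\<close> unfolding P2_def by blast
    have "cyc_monotone \<gamma> A" by (rule ii_to_iii[OF Af(1,2,4)])
    then show "\<exists>A. A \<subseteq> Mtilde \<and> cyc_monotone \<gamma> A \<and> pos_part \<mu> A + neg_part \<mu> (flip_pair ` A) \<ge> \<gamma> * T"
      using Af by blast
  qed
  have iii_ii: "P2" if P3
    unfolding P2_def
  proof (intro allI impI)
    fix \<gamma> :: real assume g: "0 < \<gamma> \<and> \<gamma> < 1"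
    then obtain A where A: "A \<subseteq> Mtilde" "cyc_monotone \<gamma> A"
        "pos_part \<mu> A + neg_part \<mu> (flip_pair ` A) \<ge> \<gamma> * T"
      using \<open>P3\<close> unfolding P3_def by blast
    obtain f where f: "f \<in> Lip0_ball z0" "\<forall>(x, y)\<in>A. deLeeuw f (x, y) \<ge> \<gamma>"
      using iii_to_f[OF A(2), of z0] by blast
    show "\<exists>A f. A \<subseteq> Mtilde \<and> f \<in> Lip0_ball z0 \<and>
                     pos_part \<mu> A + neg_part \<mu> (flip_pair ` A) \<ge> \<gamma> * T \<and>
                     (\<forall>(x, y)\<in>A. deLeeuw f (x, y) \<ge> \<gamma>)"
      using A f by blast
  qed
  have ii_i: "D = T" if P2
  proof -
    have step1: "2 * \<gamma>\<^sup>2 * T - T \<le> D" if g: "0 < \<gamma>" "\<gamma> < 1" for \<gamma> :: real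
    proof -
      obtain A f where Af: "A \<subseteq> Mtilde" "f \<in> Lip0_ball z0"
          "pos_part \<mu> A + neg_part \<mu> (flip_pair ` A) \<ge> \<gamma> * T" "\<forall>(x, y)\<in>A. deLeeuw f (x, y) \<ge> \<gamma>"
        using \<open>P2\<close> g unfolding P2_def by blast
      show ?thesis
      proof (rule field_le_epsilon)
        fix e :: real assume e: "0 < e"
        define \<delta> where "\<delta> = e / (2 * (T + 1))"
        have d: "0 < \<delta>" unfolding \<delta>_def using e T0 by auto
        have e8: "0 < e / 8" using e by simp
        have le: "2 * \<gamma> * (pos_part \<mu> A + neg_part \<mu> (flip_pair ` A) - 2 * (e / 8)) - T - \<delta> * T
            \<le> ba_integral Mtilde \<mu> (deLeeuw f)"
          using lower_est[OF ba g Af(1,2,4) e8 d] unfolding T_def .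
        have m: "2 * \<gamma> * (\<gamma> * T - 2 * (e / 8)) \<le> 2 * \<gamma> * (pos_part \<mu> A + neg_part \<mu> (flip_pair ` A) - 2 * (e / 8))"
          using Af(3) g by (intro mult_left_mono) auto
        have dT: "2 * \<delta> * T \<le> e" unfolding \<delta>_def by (rule ratio2_le[OF T0 e])
        have ge: "\<gamma> * e \<le> e" using g e by simp
        have "ba_integral Mtilde \<mu> (deLeeuw f) \<le> D" using ID[OF Af(2)] by simp
        with le m dT ge show "2 * \<gamma>\<^sup>2 * T - T \<le> D + e"
          by (simp add: power2_eq_square algebra_simps)
      qed
    qed
    have "T \<le> D"
    proof (rule field_le_epsilon)
      fix e :: real assume e: "0 < e"
      define s where "s = min (1/2) (e / (4 * (T + 1)))"
      have pe: "0 < e / (4 * (T + 1))" using e T0 by (intro divide_pos_pos) auto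
      have s1: "s \<le> 1/2" unfolding s_def by (rule min.cobounded1)
      have s2: "s \<le> e / (4 * (T + 1))" unfolding s_def by (rule min.cobounded2)
      have s0: "0 < s" unfolding s_def using pe by simp
      note s = s0 s1 s2
      have g: "0 < 1 - s" "1 - s < 1" using s by auto
      have 1: "2 * (1 - s)\<^sup>2 * T - T \<le> D" by (rule step1[OF g])
      have 2: "2 * (1 - 2 * s) * T \<le> 2 * (1 - s)\<^sup>2 * T"
      proof -
        have "1 - 2 * s \<le> (1 - s)\<^sup>2" by (simp add: power2_eq_square algebra_simps)
        then show ?thesis using T0 by (intro mult_right_mono mult_left_mono) auto
      qed
      have 3: "4 * s * T \<le> e"
      proof -
        have "4 * s * T \<le> 4 * (e / (4 * (T + 1))) * T" using s T0 by (intro mult_right_mono) auto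
        also have "\<dots> = e / (T + 1) * T"
        proof -
          have "4 * (e / (4 * (T + 1))) = e / (T + 1)"
            by (metis mult_divide_mult_cancel_left_if times_divide_eq_right zero_neq_numeral)
          then show ?thesis by simp
        qed
        also have "\<dots> < e" by (rule ratio_lt[OF T0 e])
        finally show ?thesis by simp
      qed
      from 1 2 3 show "T \<le> D + e" by (simp add: algebra_simps)
    qed
    with DT show ?thesis by simp
  qed
  have i_ii: "P2" if DeqT: "D = T"
    unfolding P2_def
  proof (intro allI impI)
    fix \<gamma> :: real assume g: "0 < \<gamma> \<and> \<gamma> < 1"
    then have g1: "0 < \<gamma>" "\<gamma> < 1" by auto
    show "\<exists>A f. A \<subseteq> Mtilde \<and> f \<in> Lip0_ball z0 \<and>
                     pos_part \<mu> A + neg_part \<mu> (flip_pair ` A) \<ge> \<gamma> * T \<and>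
                     (\<forall>(x, y)\<in>A. deLeeuw f (x, y) \<ge> \<gamma>)"
    proof (cases "T = 0")
      case True
      have "\<mu> {} \<le> pos_part \<mu> {}" "- \<mu> {} \<le> neg_part \<mu> (flip_pair ` {})"
        using pos_part_ge[OF ba, of "{}" "{}"] by auto
      then have "0 \<le> pos_part \<mu> {} + neg_part \<mu> (flip_pair ` {})" by (simp add: mu_empty)
      then show ?thesis using True zero_ball by fastforce
    next
      case False
      then have Tp: "0 < T" using T0 by simp
      define \<eta> where "\<eta> = (1 - \<gamma>)\<^sup>2 * T / 2"
      have eta: "0 < \<eta>" unfolding \<eta>_def using g1 Tp by simp
      define Y where "Y = {\<bar>ba_integral Mtilde \<mu> (deLeeuw f)\<bar> | f. f \<in> Lip0_ball z0}"
      have Yne: "Y \<noteq> {}" unfolding Y_def using zero_ball by blast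
      have Ybdd: "bdd_above Y"
      proof (rule bdd_aboveI[of _ D])
        fix y assume "y \<in> Y"
        then obtain f where "y = \<bar>ba_integral Mtilde \<mu> (deLeeuw f)\<bar>" "f \<in> Lip0_ball z0" unfolding Y_def by blast
        then show "y \<le> D" using ID by simp
      qed
      have "D - \<eta> < Sup Y" using eta unfolding D_def dual_norm_Phi_star_def Y_def by simp
      then obtain y where "y \<in> Y" "D - \<eta> < y" using less_cSup_iff[OF Yne Ybdd] by blast
      then obtain f0 where f0: "f0 \<in> Lip0_ball z0" "D - \<eta> < \<bar>ba_integral Mtilde \<mu> (deLeeuw f0)\<bar>"
        unfolding Y_def by blast
      have "\<exists>f. f \<in> Lip0_ball z0 \<and> T - \<eta> < ba_integral Mtilde \<mu> (deLeeuw f)"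
      proof (cases "0 \<le> ba_integral Mtilde \<mu> (deLeeuw f0)")
        case True then show ?thesis using f0 DeqT by auto
      next
        case False
        have bd: "\<forall>u\<in>Mtilde. \<bar>deLeeuw f0 u\<bar> \<le> 1" using deLeeuw_bd[OF f0(1)] by blast
        have "ba_integral Mtilde \<mu> (deLeeuw (\<lambda>x. - f0 x)) = - ba_integral Mtilde \<mu> (deLeeuw f0)"
          unfolding deLeeuw_neg by (rule integral_neg[OF bd])
        then show ?thesis using f0 DeqT False neg_ball[OF f0(1)] by (intro exI[of _ "\<lambda>x. - f0 x"]) auto
      qed
      then obtain f where f: "f \<in> Lip0_ball z0" "T - \<eta> < ba_integral Mtilde \<mu> (deLeeuw f)" by blast
      define \<delta> where "\<delta> = (1 - \<gamma>)\<^sup>2 / 2"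
      have d: "0 < \<delta>" unfolding \<delta>_def using g1 by simp
      obtain A where A: "A \<subseteq> Mtilde" "\<forall>(x, y)\<in>A. deLeeuw f (x, y) \<ge> \<gamma>"
        "ba_integral Mtilde \<mu> (deLeeuw f) - \<gamma> * T - \<delta> * T \<le> (1 - \<gamma>) * (pos_part \<mu> A + neg_part \<mu> (flip_pair ` A))"
        using upper_est[OF ba g1 f(1) d] unfolding T_def by blast
      have "(1 - \<gamma>) * (\<gamma> * T) = T - \<eta> - \<gamma> * T - \<delta> * T"
        unfolding \<eta>_def \<delta>_def by (simp add: power2_eq_square algebra_simps)
      then have "(1 - \<gamma>) * (\<gamma> * T) \<le> (1 - \<gamma>) * (pos_part \<mu> A + neg_part \<mu> (flip_pair ` A))"
        using A(3) f(2) by linarith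
      then have "\<gamma> * T \<le> pos_part \<mu> A + neg_part \<mu> (flip_pair ` A)"
        using g1 by (simp add: mult_le_cancel_left)
      then show ?thesis using A f(1) by blast
    qed
  qed
  have e2: "P2 \<longleftrightarrow> D = T" using i_ii ii_i by blast
  have e3: "P3 \<longleftrightarrow> D = T" using e2 ii_iii iii_ii by blast
  show ?thesis using e2 e3 unfolding P2_def P3_def D_def bn T_def by blast
qed


end
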